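(* (1) Suppose there are a function $D:\mathbb{N}\rightarrow\mathbb{R}_{>0}$ and a constant $C>0$ such that for every $n$, every (possibly partial) Boolean function $F:X\rightarrow\{0,1\}$ with $X\subseteq\{0,1\}^n$, and every nondeterministic quantum query algorithm for $F$ using $T$ queries, there is a nondeterministic quantum communication protocol for $F^{\oplus}$ using at most $C\,D(n)\,T$ qubits. Then $D(n)=\Omega(\log n)$, i.e., there is $c>0$ with $D(n)\ge c\log n$ for all sufficiently large $n$. The same conclusion holds with "nondeterministic" replaced throughout by "exact". (2) Suppose there are a function $D:\mathbb{N}\rightarrow\mathbb{R}_{>0}$ and a constant $C>0$ such that for every $n$, every $F:\{0,1\}^n\rightarrow\{0,1\}$, and every unbounded error quantum query algorithm for $F$ using $T$ queries, there is an unbounded error quantum communication protocol for $F^{\wedge}$ using at most $C\,D(n)\,T$ qubits. Then $D(n)=\Omega(\log n)$.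
   Context: A quantum query algorithm for $F$ alternates input-independent unitaries with the oracle $O_x:|i,b,z\rangle\mapsto|i,b\oplus x_i,z\rangle$ and measures an output bit. It is exact if it always outputs $F(x)$; nondeterministic if for every input in the domain it outputs 1 with positive probability exactly when $F(x)=1$; unbounded error if on every input in the domain it outputs $F(x)$ with probability strictly greater than $1/2$. Quantum communication protocols are two-party protocols exchanging qubits, with the same three correctness notions relative to the distributed function. For $F$ on $n$ bits, $F^{\oplus}(x,y)=F(x\oplus y)$ (Alice holds $x$, Bob holds $y$; defined when $x\oplus y$ is in the domain of $F$) and $F^{\wedge}(x,y)=F(x\wedge y)$ with bitwise AND. *)

theory Defs
  imports Complex_Main "Jordan_Normal_Form.Schur_Decomposition"
begin

definition unitary_mat :: "nat \<Rightarrow> complex mat \<Rightarrow> bool" where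
  "unitary_mat d U \<longleftrightarrow> U \<in> carrier_mat d d \<and> mat_adjoint U * U = 1\<^sub>m d"

definition exact_comp :: "'a set \<Rightarrow> ('a \<Rightarrow> bool) \<Rightarrow> ('a \<Rightarrow> real) \<Rightarrow> bool" where
  "exact_comp Dom G p \<longleftrightarrow> (\<forall>z\<in>Dom. p z = (if G z then 1 else 0))"

definition nondet_comp :: "'a set \<Rightarrow> ('a \<Rightarrow> bool) \<Rightarrow> ('a \<Rightarrow> real) \<Rightarrow> bool" where
  "nondet_comp Dom G p \<longleftrightarrow> (\<forall>z\<in>Dom. (p z > 0 \<longleftrightarrow> G z))"

definition unbounded_comp :: "'a set \<Rightarrow> ('a \<Rightarrow> bool) \<Rightarrow> ('a \<Rightarrow> real) \<Rightarrow> bool" where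
  "unbounded_comp Dom G p \<longleftrightarrow> (\<forall>z\<in>Dom. (if G z then p z > 1/2 else 1 - p z > 1/2))"

text \<open>Inputs are Boolean lists of length n. The state space is spanned by
  basis states |i,b,z> with i < n (index register), b < 2 (output/target bit),
  z < m (workspace); |i,b,z> has index (i*2+b)*m+z.\<close>

definition qdim :: "nat \<Rightarrow> nat \<Rightarrow> nat" where
  "qdim n m = n * 2 * m"

definition qflip :: "nat \<Rightarrow> bool list \<Rightarrow> nat \<Rightarrow> nat" where
  "qflip m x s = (let i = s div (2*m); c = (s div m) mod 2 in
      if x ! i then (if c = 0 then s + m else s - m) else s)"

text \<open>The query_op O_x : |i,b,z> -> |i, b xor x_i, z>.\<close>
definition query_op :: "nat \<Rightarrow> nat \<Rightarrow> bool list \<Rightarrow> complex mat" where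
  "query_op n m x = mat (qdim n m) (qdim n m) (\<lambda>(r,s). if r = qflip m x s then 1 else 0)"

fun qstate :: "nat \<Rightarrow> nat \<Rightarrow> (nat \<Rightarrow> complex mat) \<Rightarrow> bool list \<Rightarrow> nat \<Rightarrow> complex vec" where
  "qstate n m U x 0 = U 0 *\<^sub>v unit_vec (qdim n m) 0"
| "qstate n m U x (Suc t) = U (Suc t) *\<^sub>v (query_op n m x *\<^sub>v qstate n m U x t)"

text \<open>Probability that measuring the output bit b after T queries gives 1.\<close>
definition qprob1 :: "nat \<Rightarrow> nat \<Rightarrow> (nat \<Rightarrow> complex mat) \<Rightarrow> nat \<Rightarrow> bool list \<Rightarrow> real" where
  "qprob1 n m U T x = (\<Sum>r\<in>{r. r < qdim n m \<and> odd (r div m)}. (cmod (qstate n m U x T $ r))\<^sup>2)"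

definition qalg_valid :: "nat \<Rightarrow> nat \<Rightarrow> nat \<Rightarrow> (nat \<Rightarrow> complex mat) \<Rightarrow> bool" where
  "qalg_valid n m T U \<longleftrightarrow> m \<ge> 1 \<and> (\<forall>t\<le>T. unitary_mat (qdim n m) (U t))"

text \<open>Alice's private register has dimension pa, a one-qubit channel C, Bob's
  private register has dimension pb; basis state |i,c,j> has index
  (i*2+c)*pb+j. There are nmsg+1 rounds 0..nmsg; in round t the party holding
  the channel qubit applies a unitary (depending on its own input) to its private
  register together with the channel qubit, and then (if t < nmsg) sends the
  channel qubit to the other party. Thus nmsg qubits are communicated. After the
  last round the channel qubit is measured and gives the output.\<close>

record qprotocol =
  pa :: nat
  pb :: nat
  alice_first :: bool
  nmsg :: nat
  ua :: "nat \<Rightarrow> bool list \<Rightarrow> complex mat"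
  ub :: "nat \<Rightarrow> bool list \<Rightarrow> complex mat"

definition alice_acts :: "qprotocol \<Rightarrow> nat \<Rightarrow> bool" where
  "alice_acts P t \<longleftrightarrow> (even t \<longleftrightarrow> alice_first P)"

definition pdim :: "qprotocol \<Rightarrow> nat" where
  "pdim P = pa P * 2 * pb P"

text \<open>U on A\<otimes>C lifted to A\<otimes>C\<otimes>B (U \<otimes> I_B).\<close>
definition liftA :: "nat \<Rightarrow> nat \<Rightarrow> complex mat \<Rightarrow> complex mat" where
  "liftA a b U = mat (a*2*b) (a*2*b)
     (\<lambda>(r,s). if r mod b = s mod b then U $$ (r div b, s div b) else 0)"

text \<open>V on C\<otimes>B lifted to A\<otimes>C\<otimes>B (I_A \<otimes> V).\<close>
definition liftB :: "nat \<Rightarrow> nat \<Rightarrow> complex mat \<Rightarrow> complex mat" where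
  "liftB a b V = mat (a*2*b) (a*2*b)
     (\<lambda>(r,s). if r div (2*b) = s div (2*b) then V $$ (r mod (2*b), s mod (2*b)) else 0)"

definition pstep :: "qprotocol \<Rightarrow> bool list \<Rightarrow> bool list \<Rightarrow> nat \<Rightarrow> complex mat" where
  "pstep P x y t = (if alice_acts P t then liftA (pa P) (pb P) (ua P t x)
                    else liftB (pa P) (pb P) (ub P t y))"

fun pstate :: "qprotocol \<Rightarrow> bool list \<Rightarrow> bool list \<Rightarrow> nat \<Rightarrow> complex vec" where
  "pstate P x y 0 = pstep P x y 0 *\<^sub>v unit_vec (pdim P) 0"
| "pstate P x y (Suc t) = pstep P x y (Suc t) *\<^sub>v pstate P x y t"

definition pprob1 :: "qprotocol \<Rightarrow> bool list \<times> bool list \<Rightarrow> real" where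
  "pprob1 P xy = (\<Sum>r\<in>{r. r < pdim P \<and> odd (r div pb P)}.
       (cmod (pstate P (fst xy) (snd xy) (nmsg P) $ r))\<^sup>2)"

definition qprot_valid :: "nat \<Rightarrow> qprotocol \<Rightarrow> bool" where
  "qprot_valid n P \<longleftrightarrow> pa P \<ge> 1 \<and> pb P \<ge> 1 \<and>
     (\<forall>t\<le>nmsg P. \<forall>x y. length x = n \<and> length y = n \<longrightarrow>
        (if alice_acts P t then unitary_mat (2 * pa P) (ua P t x)
         else unitary_mat (2 * pb P) (ub P t y)))"

definition xor_list :: "bool list \<Rightarrow> bool list \<Rightarrow> bool list" where
  "xor_list x y = map2 (\<noteq>) x y"

definition and_list :: "bool list \<Rightarrow> bool list \<Rightarrow> bool list" where
  "and_list x y = map2 (\<and>) x y"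

definition xor_dom :: "nat \<Rightarrow> bool list set \<Rightarrow> (bool list \<times> bool list) set" where
  "xor_dom n X = {(x,y). length x = n \<and> length y = n \<and> xor_list x y \<in> X}"

definition xor_fun :: "(bool list \<Rightarrow> bool) \<Rightarrow> bool list \<times> bool list \<Rightarrow> bool" where
  "xor_fun F xy = F (xor_list (fst xy) (snd xy))"

definition and_dom :: "nat \<Rightarrow> (bool list \<times> bool list) set" where
  "and_dom n = {(x,y). length x = n \<and> length y = n}"

definition and_fun :: "(bool list \<Rightarrow> bool) \<Rightarrow> bool list \<times> bool list \<Rightarrow> bool" where
  "and_fun F xy = F (and_list (fst xy) (snd xy))"

end

theory Submission
  imports Defs
begin

lemma sum_split_nat: fixes k q :: nat and f :: "nat \<Rightarrow> 'a::comm_monoid_add" shows "(\<Sum>r<k*q. f r) = (\<Sum>i<k. \<Sum>c<q. f (i*q+c))"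
proof (induction k)
  case 0 then show ?case by simp
next
  case (Suc k)
  have "(\<Sum>r<Suc k*q. f r) = (\<Sum>r<k*q. f r) + (\<Sum>r\<in>{k*q..<k*q+q}. f r)"
    by (simp add: add.commute sum.atLeastLessThan_concat[symmetric] lessThan_atLeast0
        flip: sum.atLeastLessThan_concat[of 0 "k*q" "k*q+q"])
  also have "(\<Sum>r\<in>{k*q..<k*q+q}. f r) = (\<Sum>c<q. f (k*q+c))"
    using sum.shift_bounds_nat_ivl[of f 0 "k*q" q] by (simp add: lessThan_atLeast0 add.commute)
  finally show ?case using Suc by simp
qed

lemma lin_dep:
  fixes v :: "'i \<Rightarrow> 'j \<Rightarrow> real"
  assumes "finite J" "finite I" "card J < card I"
  shows "\<exists>lam. (\<exists>k\<in>I. lam k \<noteq> 0) \<and> (\<forall>j\<in>J. (\<Sum>k\<in>I. lam k * v k j) = 0)"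
  using assms
proof (induction J arbitrary: I v rule: finite_induct)
  case empty
  then obtain k where "k \<in> I" by fastforce
  then show ?case by (intro exI[of _ "\<lambda>_. 1"]) auto
next
  case (insert j0 J)
  show ?case
  proof (cases "\<forall>k\<in>I. v k j0 = 0")
    case True
    have "card J < card I" using insert by simp
    from insert.IH[OF insert.prems(1) this, of v] obtain lam where
      lam: "\<exists>k\<in>I. lam k \<noteq> 0" "\<forall>j\<in>J. (\<Sum>k\<in>I. lam k * v k j) = 0" by blast
    show ?thesis using True lam by (intro exI[of _ lam]) auto
  next
    case False
    then obtain k0 where k0: "k0 \<in> I" "v k0 j0 \<noteq> 0" by auto
    define I' where "I' = I - {k0}"
    define v' where "v' k j = v k j - v k j0 / v k0 j0 * v k0 j" for k j
    have fI': "finite I'" using insert by (simp add: I'_def)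
    have "card J < card I'" using insert k0 by (simp add: I'_def card_Diff_singleton)
    from insert.IH[OF fI' this, of v'] obtain mu where
      mu: "\<exists>k\<in>I'. mu k \<noteq> 0" "\<forall>j\<in>J. (\<Sum>k\<in>I'. mu k * v' k j) = 0" by blast
    define c where "c = (\<Sum>k\<in>I'. mu k * v k j0)"
    define lam where "lam k = (if k = k0 then - c / v k0 j0 else mu k)" for k
    have split: "(\<Sum>k\<in>I. lam k * v k j) = lam k0 * v k0 j + (\<Sum>k\<in>I'. mu k * v k j)" for j
    proof -
      have "(\<Sum>k\<in>I. lam k * v k j) = lam k0 * v k0 j + (\<Sum>k\<in>I'. lam k * v k j)"
        using k0 insert.prems(1) by (simp add: I'_def sum.remove)
      also have "(\<Sum>k\<in>I'. lam k * v k j) = (\<Sum>k\<in>I'. mu k * v k j)"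
        by (rule sum.cong) (auto simp: lam_def I'_def)
      finally show ?thesis .
    qed
    have eqJ: "(\<Sum>k\<in>I'. mu k * v k j) = c / v k0 j0 * v k0 j" if "j \<in> J" for j
    proof -
      have "(\<Sum>k\<in>I'. mu k * v k j) = (\<Sum>k\<in>I'. mu k * v' k j + (mu k * v k j0) * (v k0 j / v k0 j0))"
        by (rule sum.cong) (auto simp: v'_def algebra_simps)
      also have "\<dots> = c * (v k0 j / v k0 j0)" using mu(2) that
        by (simp add: sum.distrib c_def sum_distrib_right sum_divide_distrib)
      finally show ?thesis by simp
    qed
    show ?thesis
    proof (intro exI[of _ lam] conjI ballI)
      show "\<exists>k\<in>I. lam k \<noteq> 0" using mu(1) by (auto simp: lam_def I'_def)
    next
      fix j assume "j \<in> insert j0 J"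
      then consider "j = j0" | "j \<in> J" by auto
      then show "(\<Sum>k\<in>I. lam k * v k j) = 0"
      proof cases
        case 1 then show ?thesis unfolding split using k0 by (simp add: lam_def c_def)
      next
        case 2 then show ?thesis unfolding split using k0 by (simp add: lam_def eqJ)
      qed
    qed
  qed
qed

lemma rank_bound:
  fixes a :: "'j \<Rightarrow> 'i \<Rightarrow> real" and b :: "'j \<Rightarrow> 'i \<Rightarrow> real"
  assumes "finite J" "finite I"
    and diag: "\<forall>k\<in>I. \<forall>l\<in>I. (\<Sum>j\<in>J. a j k * b j l) = 0 \<longleftrightarrow> k \<noteq> l"
  shows "card I \<le> card J"
proof (rule ccontr)
  assume "\<not> card I \<le> card J"
  then have "card J < card I" by simp
  from lin_dep[OF assms(1,2) this, of "\<lambda>k j. a j k"] obtain lam where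
    lam: "\<exists>k\<in>I. lam k \<noteq> 0" "\<forall>j\<in>J. (\<Sum>k\<in>I. lam k * a j k) = 0" by blast
  then obtain k0 where k0: "k0 \<in> I" "lam k0 \<noteq> 0" by blast
  have "(\<Sum>k\<in>I. lam k * (\<Sum>j\<in>J. a j k * b j k0)) = (\<Sum>j\<in>J. (\<Sum>k\<in>I. lam k * a j k) * b j k0)"
    by (simp add: sum_distrib_left sum_distrib_right sum.swap[of _ I] mult.assoc)
  also have "\<dots> = 0" using lam(2) by simp
  finally have z: "(\<Sum>k\<in>I. lam k * (\<Sum>j\<in>J. a j k * b j k0)) = 0" .
  have "(\<Sum>k\<in>I. lam k * (\<Sum>j\<in>J. a j k * b j k0)) = lam k0 * (\<Sum>j\<in>J. a j k0 * b j k0)"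
    using k0 diag assms(2) by (intro sum.remove[THEN trans]) (auto intro!: sum.neutral)
  moreover have "(\<Sum>j\<in>J. a j k0 * b j k0) \<noteq> 0" using diag k0 by blast
  ultimately show False using z k0 by simp
qed

lemma sign_bound:
  fixes a :: "'j \<Rightarrow> 'x \<Rightarrow> real" and b :: "'j \<Rightarrow> nat \<Rightarrow> real" and P :: "'x \<Rightarrow> nat \<Rightarrow> bool"
  assumes "finite J"
    and realize: "\<forall>S \<subseteq> {..<n}. \<exists>x. \<forall>i<n. P x i \<longleftrightarrow> i \<in> S"
    and pos: "\<forall>x. \<forall>i<n. P x i \<longrightarrow> (\<Sum>j\<in>J. a j x * b j i) > 1/2"
    and neg: "\<forall>x. \<forall>i<n. \<not> P x i \<longrightarrow> (\<Sum>j\<in>J. a j x * b j i) < 1/2"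
  shows "n \<le> card J + 1"
proof (rule ccontr)
  assume "\<not> n \<le> card J + 1"
  define J' where "J' = insert None (Some ` J)"
  have cJ: "card J' = card J + 1" using assms(1) by (simp add: J'_def card_image)
  define v where "v i jj = (case jj of None \<Rightarrow> 1 | Some j \<Rightarrow> b j i)" for i jj
  have "card J' < card {..<n}" using cJ \<open>\<not> n \<le> card J + 1\<close> by simp
  from lin_dep[OF _ _ this, of v] assms(1) obtain lam where
    lam: "\<exists>k\<in>{..<n}. lam k \<noteq> 0" "\<forall>j\<in>J'. (\<Sum>k<n. lam k * v k j) = 0"
    by (auto simp: J'_def)
  have s1: "(\<Sum>k<n. lam k) = 0" using lam(2) by (auto simp: J'_def v_def)
  have s2: "(\<Sum>k<n. lam k * b j k) = 0" if "j \<in> J" for j using lam(2) that by (auto simp: J'_def v_def)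
  obtain x where x: "\<forall>i<n. P x i \<longleftrightarrow> i \<in> {i. i < n \<and> lam i > 0}"
    using realize by (metis (no_types, lifting) lessThan_iff mem_Collect_eq subsetI)
  define p where "p i = (\<Sum>j\<in>J. a j x * b j i)" for i
  have "(\<Sum>k<n. lam k * (p k - 1/2)) = (\<Sum>j\<in>J. a j x * (\<Sum>k<n. lam k * b j k)) - (\<Sum>k<n. lam k) / 2"
    by (simp add: p_def right_diff_distrib sum_subtractf sum_distrib_left sum_distrib_right
        sum.swap[of _ "{..<n}"] sum_divide_distrib mult.assoc mult.left_commute)
  also have "\<dots> = 0" using s1 s2 by simp
  finally have z: "(\<Sum>k<n. lam k * (p k - 1/2)) = 0" .
  have nn: "0 \<le> lam k * (p k - 1/2)" if "k < n" for k
  proof (cases "lam k > 0")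
    case True then have "P x k" using x that by auto
    then have "p k > 1/2" using pos that by (auto simp: p_def)
    then show ?thesis using True by simp
  next
    case False then have "\<not> P x k" using x that by auto
    then have "p k < 1/2" using neg that by (auto simp: p_def)
    then show ?thesis using False by (simp add: mult_nonpos_nonpos)
  qed
  obtain k0 where k0: "k0 < n" "lam k0 \<noteq> 0" using lam(1) by auto
  have "0 < lam k0 * (p k0 - 1/2)"
  proof (cases "lam k0 > 0")
    case True then have "P x k0" using x k0 by auto
    then have "p k0 > 1/2" using pos k0 by (auto simp: p_def)
    then show ?thesis using True by simp
  next
    case False then have "\<not> P x k0" using x k0 by auto
    then have "p k0 < 1/2" using neg k0 by (auto simp: p_def)
    then show ?thesis using False k0 by (simp add: mult_neg_neg)
  qed
  then have "0 < (\<Sum>k<n. lam k * (p k - 1/2))"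
    using nn k0 by (intro sum_pos2[of _ k0]) auto
  then show False using z by simp
qed

lemma mv_entry: "i < dim_row A \<Longrightarrow> dim_col A = dim_vec v \<Longrightarrow>
   (A *\<^sub>v v) $ i = (\<Sum>j<dim_vec v. A $$ (i,j) * v $ j)"
  by (simp add: scalar_prod_def lessThan_atLeast0)

lemma idx3_div: "j < b \<Longrightarrow> ((q::nat)*b+j) div b = q" by simp
lemma idx3_mod: "j < b \<Longrightarrow> ((q::nat)*b+j) mod b = j" by simp

lemma liftA_apply:
  assumes "dim_vec v = a*2*b" "i < a" "c < 2" "j < b"
  shows "(liftA a b U *\<^sub>v v) $ ((i*2+c)*b+j) =
         (\<Sum>i'<a. \<Sum>c'<2. U $$ (i*2+c, i'*2+c') * v $ ((i'*2+c')*b+j))"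
proof -
  have r: "(i*2+c)*b+j < a*2*b"
  proof -
    have "(i*2+c)*b+j < (i*2+c)*b+b" using assms by simp
    also have "\<dots> = (i*2+c+1)*b" by simp
    also have "\<dots> \<le> (a*2)*b" using assms by (intro mult_right_mono) auto
    finally show ?thesis by simp
  qed
  have "(liftA a b U *\<^sub>v v) $ ((i*2+c)*b+j) =
        (\<Sum>s<(a*2)*b. liftA a b U $$ ((i*2+c)*b+j, s) * v $ s)"
    using assms r by (subst mv_entry) (auto simp: liftA_def)
  also have "\<dots> = (\<Sum>q<a*2. \<Sum>j'<b. liftA a b U $$ ((i*2+c)*b+j, q*b+j') * v $ (q*b+j'))"
    by (rule sum_split_nat)
  also have "\<dots> = (\<Sum>q<a*2. U $$ (i*2+c, q) * v $ (q*b+j))"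
  proof (rule sum.cong[OF refl])
    fix q assume q: "q \<in> {..<a*2}"
    have "(\<Sum>j'<b. liftA a b U $$ ((i*2+c)*b+j, q*b+j') * v $ (q*b+j')) =
          (\<Sum>j'<b. if j = j' then U $$ (i*2+c, q) * v $ (q*b+j') else 0)"
    proof (rule sum.cong[OF refl])
      fix j' assume j': "j' \<in> {..<b}"
      have s: "q*b+j' < a*2*b"
      proof -
        have "q*b+j' < q*b+b" using j' by simp
        also have "\<dots> = (q+1)*b" by simp
        also have "\<dots> \<le> (a*2)*b" using q by (intro mult_right_mono) auto
        finally show ?thesis by simp
      qed
      show "liftA a b U $$ ((i*2+c)*b+j, q*b+j') * v $ (q*b+j') =
            (if j = j' then U $$ (i*2+c, q) * v $ (q*b+j') else 0)"
        using r s j' assms by (auto simp: liftA_def)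
    qed
    also have "\<dots> = U $$ (i*2+c, q) * v $ (q*b+j)" using assms by simp
    finally show "(\<Sum>j'<b. liftA a b U $$ ((i*2+c)*b+j, q*b+j') * v $ (q*b+j')) = U $$ (i*2+c, q) * v $ (q*b+j)" .
  qed
  also have "\<dots> = (\<Sum>i'<a. \<Sum>c'<2. U $$ (i*2+c, i'*2+c') * v $ ((i'*2+c')*b+j))"
    by (rule sum_split_nat)
  finally show ?thesis .
qed

lemma liftB_apply:
  assumes "dim_vec v = a*2*b" "i < a" "c < 2" "j < b"
  shows "(liftB a b V *\<^sub>v v) $ ((i*2+c)*b+j) =
         (\<Sum>c'<2. \<Sum>j'<b. V $$ (c*b+j, c'*b+j') * v $ ((i*2+c')*b+j'))"
proof -
  have e: "(i*2+c)*b+j = i*(2*b) + (c*b+j)" by (simp add: algebra_simps)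
  have cb: "c*b+j < 2*b"
  proof -
    have "c*b+j < c*b+b" using assms by simp
    also have "\<dots> = (c+1)*b" by simp
    also have "\<dots> \<le> 2*b" using assms by (intro mult_right_mono) auto
    finally show ?thesis .
  qed
  have r: "i*(2*b) + (c*b+j) < a*(2*b)"
  proof -
    have "i*(2*b) + (c*b+j) < i*(2*b) + 2*b" using cb by simp
    also have "\<dots> = (i+1)*(2*b)" by simp
    also have "\<dots> \<le> a*(2*b)" using assms by (intro mult_right_mono) auto
    finally show ?thesis .
  qed
  have dv: "dim_vec v = a*(2*b)" using assms by simp
  have "(liftB a b V *\<^sub>v v) $ ((i*2+c)*b+j) =
        (\<Sum>s<a*(2*b). liftB a b V $$ (i*(2*b) + (c*b+j), s) * v $ s)"
    unfolding e using assms r dv by (subst mv_entry) (auto simp: liftB_def mult.assoc)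
  also have "\<dots> = (\<Sum>q<a. \<Sum>d<2*b. liftB a b V $$ (i*(2*b) + (c*b+j), q*(2*b)+d) * v $ (q*(2*b)+d))"
    by (rule sum_split_nat)
  also have "\<dots> = (\<Sum>d<2*b. V $$ (c*b+j, d) * v $ (i*(2*b)+d))"
  proof -
    have "(\<Sum>q<a. \<Sum>d<2*b. liftB a b V $$ (i*(2*b) + (c*b+j), q*(2*b)+d) * v $ (q*(2*b)+d)) =
          (\<Sum>q<a. if q = i then (\<Sum>d<2*b. V $$ (c*b+j, d) * v $ (i*(2*b)+d)) else 0)"
    proof (rule sum.cong[OF refl])
      fix q assume q: "q \<in> {..<a}"
      have pt: "liftB a b V $$ (i*(2*b) + (c*b+j), q*(2*b)+d) = (if q = i then V $$ (c*b+j, d) else 0)"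
        if d: "d < 2*b" for d
      proof -
        have s: "q*(2*b)+d < a*(2*b)"
        proof -
          have "q*(2*b)+d < q*(2*b)+2*b" using d by simp
          also have "\<dots> = (q+1)*(2*b)" by simp
          also have "\<dots> \<le> a*(2*b)" using q by (intro mult_right_mono) auto
          finally show ?thesis .
        qed
        have "(i*(2*b) + (c*b+j)) div (2*b) = i" using cb by simp
        moreover have "(q*(2*b)+d) div (2*b) = q" using d by simp
        moreover have "(i*(2*b) + (c*b+j)) mod (2*b) = c*b+j" using cb by simp
        moreover have "(q*(2*b)+d) mod (2*b) = d" using d by simp
        ultimately show ?thesis using r s by (simp add: liftB_def mult.assoc)
      qed
      show "(\<Sum>d<2*b. liftB a b V $$ (i*(2*b) + (c*b+j), q*(2*b)+d) * v $ (q*(2*b)+d)) =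
          (if q = i then (\<Sum>d<2*b. V $$ (c*b+j, d) * v $ (i*(2*b)+d)) else 0)"
      proof (cases "q = i")
        case True
        have "(\<Sum>d<2*b. liftB a b V $$ (i*(2*b) + (c*b+j), q*(2*b)+d) * v $ (q*(2*b)+d)) =
              (\<Sum>d<2*b. V $$ (c*b+j, d) * v $ (q*(2*b)+d))"
          by (rule sum.cong) (auto simp: True pt[unfolded True])
        then show ?thesis using True by simp
      next
        case False then show ?thesis by (simp add: pt)
      qed
    qed
    also have "\<dots> = (\<Sum>d<2*b. V $$ (c*b+j, d) * v $ (i*(2*b)+d))" using assms by simp
    finally show ?thesis .
  qed
  also have "\<dots> = (\<Sum>c'<2. \<Sum>j'<b. V $$ (c*b+j, c'*b+j') * v $ (i*(2*b)+(c'*b+j')))"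
    by (rule sum_split_nat[of "\<lambda>d. V $$ (c*b+j, d) * v $ (i*(2*b)+d)" 2 b])
  also have "\<dots> = (\<Sum>c'<2. \<Sum>j'<b. V $$ (c*b+j, c'*b+j') * v $ ((i*2+c')*b+j'))"
    by (simp add: algebra_simps)
  finally show ?thesis .
qed

lemma mv_unit: fixes A :: "'a::comm_ring_1 mat" shows "i < dim_row A \<Longrightarrow> dim_col A = n \<Longrightarrow> k < n \<Longrightarrow> (A *\<^sub>v unit_vec n k) $ i = A $$ (i,k)"
  by (subst mv_entry) (auto simp: if_distrib cong: if_cong)

lemma dim_pstate: "dim_vec (pstate P x y t) = pdim P"
  by (cases t) (auto simp: pstep_def liftA_def liftB_def pdim_def)

lemma swap3: fixes X :: "nat \<Rightarrow> nat \<Rightarrow> nat \<Rightarrow> 'a::comm_monoid_add"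
  shows "(\<Sum>i<A. \<Sum>c<B. \<Sum>s<C. X i c s) = (\<Sum>s<C. \<Sum>c<B. \<Sum>i<A. X i c s)"
proof -
  have "(\<Sum>i<A. \<Sum>c<B. \<Sum>s<C. X i c s) = (\<Sum>i<A. \<Sum>s<C. \<Sum>c<B. X i c s)"
    by (rule sum.cong[OF refl]) (rule sum.swap)
  also have "\<dots> = (\<Sum>s<C. \<Sum>i<A. \<Sum>c<B. X i c s)" by (rule sum.swap)
  also have "\<dots> = (\<Sum>s<C. \<Sum>c<B. \<Sum>i<A. X i c s)"
    by (rule sum.cong[OF refl]) (rule sum.swap)
  finally show ?thesis .
qed

lemma pstate_decomp:
  "\<exists>F G. \<forall>x y i c j. i < pa P \<longrightarrow> c < 2 \<longrightarrow> j < pb P \<longrightarrow>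
     pstate P x y t $ ((i*2+c)*pb P + j) = (\<Sum>s<(2::nat)^t. F s x i c * G s y c j)"
proof (induction t)
  case 0
  have r: "(i*2+c)*pb P + j < pdim P" if "i < pa P" "c < 2" "j < pb P" for i c j
  proof -
    have "(i*2+c)*pb P + j < (i*2+c)*pb P + pb P" using that by simp
    also have "\<dots> = (i*2+c+1)*pb P" by simp
    also have "\<dots> \<le> (pa P*2)*pb P" using that by (intro mult_right_mono) auto
    finally show ?thesis by (simp add: pdim_def)
  qed
  have one: "(\<Sum>s<(2::nat)^0. f s) = f 0" for f :: "nat \<Rightarrow> complex" by simp
  have c1: "card {..<(1::nat)} = Suc 0" by simp
  have pos: "0 < pdim P" if "i < pa P" "c < 2" "j < pb P" for i c j :: nat using r[OF that] by simp
  show ?case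
  proof (cases "alice_acts P 0")
    case True
    have key: "pstate P x y 0 $ ((i*2+c)*pb P + j) = ua P 0 x $$ (i*2+c, 0) * (if j = 0 then 1 else 0)"
      if a: "i < pa P" "c < 2" "j < pb P" for x y and i c j :: nat
    proof -
      have "((i*2+c)*pb P + j) mod pb P = j" "((i*2+c)*pb P + j) div pb P = i*2+c" using a by auto
      then show ?thesis
        using r[OF a] pos[OF a] True
        by (simp add: mv_unit pstep_def liftA_def pdim_def)
    qed
    show ?thesis
      by (rule exI[of _ "\<lambda>s x i c. ua P 0 x $$ (i*2+c, 0)"], rule exI[of _ "\<lambda>s y c (j::nat). if j = 0 then (1::complex) else 0"])
        (simp add: key del: pstate.simps)
  next
    case False
    have key: "pstate P x y 0 $ ((i*2+c)*pb P + j) = (if i = 0 then 1 else 0) * ub P 0 y $$ (c*pb P+j, 0)"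
      if a: "i < pa P" "c < 2" "j < pb P" for x y and i c j :: nat
    proof -
      have cb: "c*pb P+j < 2*pb P"
      proof -
        have "c*pb P+j < c*pb P+pb P" using a by simp
        also have "\<dots> = (c+1)*pb P" by simp
        also have "\<dots> \<le> 2*pb P" using a by (intro mult_right_mono) auto
        finally show ?thesis .
      qed
      have e: "(i*2+c)*pb P + j = i*(2*pb P) + (c*pb P+j)" by (simp add: algebra_simps)
      have "((i*2+c)*pb P + j) mod (2*pb P) = c*pb P+j" "((i*2+c)*pb P + j) div (2*pb P) = i"
        unfolding e using cb by auto
      then show ?thesis
        using r[OF a] pos[OF a] False cb
        by (simp add: mv_unit pstep_def liftB_def pdim_def)
    qed
    show ?thesis
      by (rule exI[of _ "\<lambda>s x (i::nat) (c::nat). if i = 0 then (1::complex) else 0"], rule exI[of _ "\<lambda>s y c j. ub P 0 y $$ (c*pb P+j, 0)"])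
        (simp add: key del: pstate.simps)
  qed
next
  case (Suc t)
  from Suc obtain F G where FG: "\<And>x y i c j. i < pa P \<Longrightarrow> c < 2 \<Longrightarrow> j < pb P \<Longrightarrow>
     pstate P x y t $ ((i*2+c)*pb P + j) = (\<Sum>s<(2::nat)^t. F s x i c * G s y c j)" by blast
  have dv: "dim_vec (pstate P x y t) = pa P*2*pb P" for x y by (simp add: dim_pstate pdim_def)
  have p2: "(2::nat)^Suc t = 2^t*2" by simp
  show ?case
  proof (cases "alice_acts P (Suc t)")
    case True
    define F' where "F' s2 x i c = (\<Sum>i'<pa P. ua P (Suc t) x $$ (i*2+c, i'*2 + s2 mod 2) * F (s2 div 2) x i' (s2 mod 2))" for s2 x i c
    define G' where "G' s2 y (c::nat) j = G (s2 div 2) y (s2 mod 2) j" for s2 y c j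
    have key: "\<forall>x y i c j. i < pa P \<longrightarrow> c < 2 \<longrightarrow> j < pb P \<longrightarrow>
       pstate P x y (Suc t) $ ((i*2+c)*pb P + j) = (\<Sum>s2<(2::nat)^Suc t. F' s2 x i c * G' s2 y c j)"
    proof (intro allI impI)
      fix x y and i c j :: nat assume a: "i < pa P" "c < 2" "j < pb P"
      have "pstate P x y (Suc t) $ ((i*2+c)*pb P + j) =
        (\<Sum>i'<pa P. \<Sum>c'<2. ua P (Suc t) x $$ (i*2+c, i'*2+c') * pstate P x y t $ ((i'*2+c')*pb P+j))"
        using True a dv by (simp add: pstep_def liftA_apply)
      also have "\<dots> = (\<Sum>i'<pa P. \<Sum>c'<2. \<Sum>s<(2::nat)^t. ua P (Suc t) x $$ (i*2+c, i'*2+c') * (F s x i' c' * G s y c' j))"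
        using a by (simp add: FG sum_distrib_left)
      also have "\<dots> = (\<Sum>s<(2::nat)^t. \<Sum>c'<2. \<Sum>i'<pa P. ua P (Suc t) x $$ (i*2+c, i'*2+c') * (F s x i' c' * G s y c' j))"
        by (rule swap3)
      also have "\<dots> = (\<Sum>s<(2::nat)^t. \<Sum>c'<2. F' (s*2+c') x i c * G' (s*2+c') y c j)"
        by (simp add: F'_def G'_def sum_distrib_right mult.assoc)
      also have "\<dots> = (\<Sum>s2<(2::nat)^Suc t. F' s2 x i c * G' s2 y c j)"
        unfolding p2 by (rule sum_split_nat[symmetric])
      finally show "pstate P x y (Suc t) $ ((i*2+c)*pb P + j) = (\<Sum>s2<(2::nat)^Suc t. F' s2 x i c * G' s2 y c j)" .
    qed
    show ?thesis using key by blast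
  next
    case False
    define F' where "F' s2 x i (c::nat) = F (s2 div 2) x i (s2 mod 2)" for s2 x i c
    define G' where "G' s2 y c j = (\<Sum>j'<pb P. ub P (Suc t) y $$ (c*pb P+j, (s2 mod 2)*pb P+j') * G (s2 div 2) y (s2 mod 2) j')" for s2 y c j
    have key: "\<forall>x y i c j. i < pa P \<longrightarrow> c < 2 \<longrightarrow> j < pb P \<longrightarrow>
       pstate P x y (Suc t) $ ((i*2+c)*pb P + j) = (\<Sum>s2<(2::nat)^Suc t. F' s2 x i c * G' s2 y c j)"
    proof (intro allI impI)
      fix x y and i c j :: nat assume a: "i < pa P" "c < 2" "j < pb P"
      have "pstate P x y (Suc t) $ ((i*2+c)*pb P + j) =
        (\<Sum>c'<2. \<Sum>j'<pb P. ub P (Suc t) y $$ (c*pb P+j, c'*pb P+j') * pstate P x y t $ ((i*2+c')*pb P+j'))"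
        using False a dv by (simp add: pstep_def liftB_apply)
      also have "\<dots> = (\<Sum>c'<2. \<Sum>j'<pb P. \<Sum>s<(2::nat)^t. ub P (Suc t) y $$ (c*pb P+j, c'*pb P+j') * (F s x i c' * G s y c' j'))"
        using a by (simp add: FG sum_distrib_left)
      also have "\<dots> = (\<Sum>s<(2::nat)^t. \<Sum>j'<pb P. \<Sum>c'<2. ub P (Suc t) y $$ (c*pb P+j, c'*pb P+j') * (F s x i c' * G s y c' j'))"
        by (rule swap3)
      also have "\<dots> = (\<Sum>s<(2::nat)^t. \<Sum>c'<2. \<Sum>j'<pb P. ub P (Suc t) y $$ (c*pb P+j, c'*pb P+j') * (F s x i c' * G s y c' j'))"
        by (rule sum.cong[OF refl]) (rule sum.swap)
      also have "\<dots> = (\<Sum>s<(2::nat)^t. \<Sum>c'<2. F' (s*2+c') x i c * G' (s*2+c') y c j)"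
        by (simp add: F'_def G'_def sum_distrib_left mult.assoc mult.left_commute)
      also have "\<dots> = (\<Sum>s2<(2::nat)^Suc t. F' s2 x i c * G' s2 y c j)"
        unfolding p2 by (rule sum_split_nat[symmetric])
      finally show "pstate P x y (Suc t) $ ((i*2+c)*pb P + j) = (\<Sum>s2<(2::nat)^Suc t. F' s2 x i c * G' s2 y c j)" .
    qed
    show ?thesis using key by blast
  qed
qed

lemma swap22: fixes Y :: "nat \<Rightarrow> nat \<Rightarrow> nat \<Rightarrow> nat \<Rightarrow> 'a::comm_monoid_add"
  shows "(\<Sum>i<A. \<Sum>j<B. \<Sum>s<C. \<Sum>s'<D. Y i j s s') = (\<Sum>s<C. \<Sum>s'<D. \<Sum>i<A. \<Sum>j<B. Y i j s s')"
proof -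
  have "(\<Sum>i<A. \<Sum>j<B. \<Sum>s<C. \<Sum>s'<D. Y i j s s') = (\<Sum>i<A. \<Sum>s<C. \<Sum>j<B. \<Sum>s'<D. Y i j s s')"
    by (rule sum.cong[OF refl]) (rule sum.swap)
  also have "\<dots> = (\<Sum>i<A. \<Sum>s<C. \<Sum>s'<D. \<Sum>j<B. Y i j s s')"
    by (rule sum.cong[OF refl], rule sum.cong[OF refl]) (rule sum.swap)
  also have "\<dots> = (\<Sum>s<C. \<Sum>i<A. \<Sum>s'<D. \<Sum>j<B. Y i j s s')" by (rule sum.swap)
  also have "\<dots> = (\<Sum>s<C. \<Sum>s'<D. \<Sum>i<A. \<Sum>j<B. Y i j s s')"
    by (rule sum.cong[OF refl]) (rule sum.swap)
  finally show ?thesis .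
qed

lemma sq_cmod: "(cmod z)\<^sup>2 = Re (z * cnj z)"
  by (simp add: cmod_power2 flip: power2_eq_square)

lemma quad_form:
  fixes f g :: "nat \<Rightarrow> nat \<Rightarrow> complex"
  shows "(\<Sum>i<a. \<Sum>j<b. (cmod (\<Sum>s<K. f s i * g s j))\<^sup>2) =
         (\<Sum>s<K. \<Sum>s'<K. Re ((\<Sum>i<a. f s i * cnj (f s' i)) * (\<Sum>j<b. g s j * cnj (g s' j))))"
proof -
  define Y where "Y i j s s' = f s i * g s j * (cnj (f s' i) * cnj (g s' j))" for i j s s'
  have "(\<Sum>i<a. \<Sum>j<b. (cmod (\<Sum>s<K. f s i * g s j))\<^sup>2) =
        (\<Sum>i<a. \<Sum>j<b. Re ((\<Sum>s<K. f s i * g s j) * cnj (\<Sum>s<K. f s i * g s j)))"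
    by (simp only: sq_cmod)
  also have "\<dots> = Re (\<Sum>i<a. \<Sum>j<b. \<Sum>s<K. \<Sum>s'<K. Y i j s s')"
  proof -
    have "(\<Sum>s<K. f s i * g s j) * cnj (\<Sum>s<K. f s i * g s j) = (\<Sum>s<K. \<Sum>s'<K. Y i j s s')" for i j
      unfolding cnj_sum complex_cnj_mult Y_def by (rule sum_product)
    then show ?thesis by (simp only: Re_sum)
  qed
  also have "\<dots> = Re (\<Sum>s<K. \<Sum>s'<K. \<Sum>i<a. \<Sum>j<b. Y i j s s')"
    by (rule arg_cong[where f=Re], rule swap22)
  also have "\<dots> = (\<Sum>s<K. \<Sum>s'<K. Re ((\<Sum>i<a. f s i * cnj (f s' i)) * (\<Sum>j<b. g s j * cnj (g s' j))))"
  proof -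
    have Yp: "Y i j s s' = (f s i * cnj (f s' i)) * (g s j * cnj (g s' j))" for i j s s'
      by (simp add: Y_def mult_ac)
    have "(\<Sum>i<a. \<Sum>j<b. Y i j s s') = (\<Sum>i<a. f s i * cnj (f s' i)) * (\<Sum>j<b. g s j * cnj (g s' j))" for s s'
      unfolding Yp by (rule sum_product[symmetric])
    then show ?thesis by (simp only: Re_sum)
  qed
  finally show ?thesis .
qed

lemma pprob1_sum:
  "pprob1 P (x,y) = (\<Sum>i<pa P. \<Sum>j<pb P. (cmod (pstate P x y (nmsg P) $ ((i*2+1)*pb P + j)))\<^sup>2)"
proof -
  define h where "h r = (cmod (pstate P x y (nmsg P) $ r))\<^sup>2" for r
  have "pprob1 P (x,y) = (\<Sum>r\<in>{r\<in>{..<(pa P*2)*pb P}. odd (r div pb P)}. h r)"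
    by (simp add: pprob1_def h_def pdim_def)
  also have "\<dots> = (\<Sum>r<(pa P*2)*pb P. if odd (r div pb P) then h r else 0)"
    by (rule sum.inter_filter) simp
  also have "\<dots> = (\<Sum>q<pa P*2. \<Sum>j<pb P. if odd ((q*pb P+j) div pb P) then h (q*pb P+j) else 0)"
    by (rule sum_split_nat)
  also have "\<dots> = (\<Sum>q<pa P*2. \<Sum>j<pb P. if odd q then h (q*pb P+j) else 0)"
    by (intro sum.cong refl) auto
  also have "\<dots> = (\<Sum>i<pa P. \<Sum>c<2. \<Sum>j<pb P. if odd (i*2+c) then h ((i*2+c)*pb P+j) else 0)"
    by (rule sum_split_nat)
  also have "\<dots> = (\<Sum>i<pa P. \<Sum>j<pb P. h ((i*2+1)*pb P+j))"
  proof (rule sum.cong[OF refl])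
    fix i
    have two: "(\<Sum>c<(2::nat). f c) = f 0 + f 1" for f :: "nat \<Rightarrow> real" by (simp add: numeral_2_eq_2)
    show "(\<Sum>c<2. \<Sum>j<pb P. if odd (i*2+c) then h ((i*2+c)*pb P+j) else 0) = (\<Sum>j<pb P. h ((i*2+1)*pb P+j))"
      by (simp only: two) simp
  qed
  finally show ?thesis by (simp add: h_def)
qed

lemma pprob1_bilinear:
  "\<exists>(J :: (nat \<times> nat \<times> bool) set) \<alpha> \<beta>. finite J \<and> card J = 2*4^nmsg P \<and>
     (\<forall>x y. pprob1 P (x,y) = (\<Sum>j\<in>J. \<alpha> j x * \<beta> j y))"
proof -
  define t where "t = nmsg P"
  obtain F G where FG: "\<And>x y i c j. i < pa P \<Longrightarrow> c < 2 \<Longrightarrow> j < pb P \<Longrightarrow>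
     pstate P x y t $ ((i*2+c)*pb P + j) = (\<Sum>s<(2::nat)^t. F s x i c * G s y c j)"
    using pstate_decomp[of P t] by blast
  define K where "K = (2::nat)^t"
  define A where "A s s' x = (\<Sum>i<pa P. F s x i 1 * cnj (F s' x i 1))" for s s' x
  define B where "B s s' y = (\<Sum>j<pb P. G s y 1 j * cnj (G s' y 1 j))" for s s' y
  define J where "J = {..<K} \<times> {..<K} \<times> (UNIV :: bool set)"
  define \<alpha> where "\<alpha> = (\<lambda>(s,s',e) x. if e then Re (A s s' x) else - Im (A s s' x))"
  define \<beta> where "\<beta> = (\<lambda>(s,s',e) y. if e then Re (B s s' y) else Im (B s s' y))"
  have "pprob1 P (x,y) = (\<Sum>j\<in>J. \<alpha> j x * \<beta> j y)" for x y
  proof -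
    have "pprob1 P (x,y) = (\<Sum>i<pa P. \<Sum>j<pb P. (cmod (\<Sum>s<K. F s x i 1 * G s y 1 j))\<^sup>2)"
      unfolding pprob1_sum t_def[symmetric] K_def by (intro sum.cong refl, subst FG) auto
    also have "\<dots> = (\<Sum>s<K. \<Sum>s'<K. Re (A s s' x * B s s' y))"
      unfolding A_def B_def by (rule quad_form)
    also have "\<dots> = (\<Sum>s<K. \<Sum>s'<K. \<Sum>e\<in>(UNIV::bool set). \<alpha> (s,s',e) x * \<beta> (s,s',e) y)"
      by (simp add: \<alpha>_def \<beta>_def UNIV_bool)
    also have "\<dots> = (\<Sum>j\<in>J. \<alpha> j x * \<beta> j y)"
      unfolding J_def by (simp add: sum.cartesian_product)
    finally show ?thesis .
  qed
  moreover have "card J = 2*4^nmsg P"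
    by (simp add: J_def K_def t_def card_cartesian_product power_mult_distrib[symmetric]
        flip: power_mult_distrib)
  moreover have "finite J" by (simp add: J_def)
  ultimately show ?thesis by blast
qed

lemma adj_entry:
  assumes "U \<in> carrier_mat d d" "i < d" "k < d"
  shows "mat_adjoint U $$ (i,k) = cnj (U $$ (k,i))"
  using assms by (simp add: mat_adjoint_def mat_of_rows_index)

lemma adj_dims[simp]: "dim_row (mat_adjoint U) = dim_col U" "dim_col (mat_adjoint U) = dim_row U"
  by (simp_all add: mat_adjoint_def)

lemma unitaryI:
  assumes U: "U \<in> carrier_mat d d"
    and orth: "\<And>i j. i < d \<Longrightarrow> j < d \<Longrightarrow> (\<Sum>k<d. cnj (U $$ (k,i)) * U $$ (k,j)) = (if i = j then 1 else 0)"
  shows "unitary_mat d U"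
proof -
  have "mat_adjoint U * U = 1\<^sub>m d"
  proof (rule eq_matI)
    show "dim_row (mat_adjoint U * U) = dim_row (1\<^sub>m d)" using U by simp
    show "dim_col (mat_adjoint U * U) = dim_col (1\<^sub>m d)" using U by simp
    fix i j assume ij: "i < dim_row (1\<^sub>m d)" "j < dim_col (1\<^sub>m d)"
    then have "(mat_adjoint U * U) $$ (i,j) = (\<Sum>k<d. mat_adjoint U $$ (i,k) * U $$ (k,j))"
      using U by (simp add: scalar_prod_def lessThan_atLeast0)
    also have "\<dots> = (\<Sum>k<d. cnj (U $$ (k,i)) * U $$ (k,j))"
      using U ij by (intro sum.cong refl) (simp add: adj_entry)
    finally show "(mat_adjoint U * U) $$ (i,j) = 1\<^sub>m d $$ (i,j)" using orth ij by simp
  qed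
  then show ?thesis using U by (simp add: unitary_mat_def)
qed

definition tens :: "nat \<Rightarrow> nat \<Rightarrow> (nat \<Rightarrow> nat \<Rightarrow> real) \<Rightarrow> (nat \<Rightarrow> nat \<Rightarrow> nat \<Rightarrow> complex) \<Rightarrow> complex mat" where
  "tens k q R G = mat (k*q) (k*q) (\<lambda>(r,s). complex_of_real (R (r div q) (s div q)) * G (r div q) (r mod q) (s mod q))"

lemma idx_lt: "l < k \<Longrightarrow> c < q \<Longrightarrow> l*q + c < k*(q::nat)"
proof -
  assume a: "l < k" "c < q"
  have "l*q + c < l*q + q" using a by simp
  also have "\<dots> = (l+1)*q" by simp
  also have "\<dots> \<le> k*q" using a by (intro mult_right_mono) auto
  finally show ?thesis .
qed

lemma tens_entry: "l < k \<Longrightarrow> c < q \<Longrightarrow> l' < k \<Longrightarrow> c' < q \<Longrightarrow>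
   tens k q R G $$ (l*q+c, l'*q+c') = complex_of_real (R l l') * G l c c'"
  by (simp add: tens_def idx_lt)

lemma tens_unitary:
  assumes R: "\<And>i j. i < k \<Longrightarrow> j < k \<Longrightarrow> (\<Sum>l<k. R l i * R l j) = (if i = j then 1 else 0)"
    and G: "\<And>l a b. l < k \<Longrightarrow> a < q \<Longrightarrow> b < q \<Longrightarrow> (\<Sum>c<q. cnj (G l c a) * G l c b) = (if a = b then 1 else 0)"
  shows "unitary_mat (k*q) (tens k q R G)"
proof (rule unitaryI)
  show "tens k q R G \<in> carrier_mat (k*q) (k*q)" by (simp add: tens_def)
  fix r s assume rs: "r < k*q" "s < k*q"
  then have q0: "0 < q" by (cases q) auto
  define i a j b where "i = r div q" "a = r mod q" "j = s div q" "b = s mod q"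
  have r: "r = i*q + a" and s: "s = j*q + b" by (simp_all add: i_a_j_b_def)
  have ia: "i < k" "a < q" "j < k" "b < q" using rs q0
    by (auto simp: i_a_j_b_def less_mult_imp_div_less)
  have "(\<Sum>t<k*q. cnj (tens k q R G $$ (t,r)) * tens k q R G $$ (t,s)) =
        (\<Sum>l<k. \<Sum>c<q. cnj (tens k q R G $$ (l*q+c,r)) * tens k q R G $$ (l*q+c,s))"
    by (rule sum_split_nat)
  also have "\<dots> = (\<Sum>l<k. complex_of_real (R l i * R l j) * (\<Sum>c<q. cnj (G l c a) * G l c b))"
    unfolding r s using ia
    by (intro sum.cong refl) (simp add: tens_entry sum_distrib_left mult_ac)
  also have "\<dots> = (\<Sum>l<k. complex_of_real (R l i * R l j) * (if a = b then 1 else 0))"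
    using ia G by (intro sum.cong refl) simp
  also have "\<dots> = complex_of_real (\<Sum>l<k. R l i * R l j) * (if a = b then 1 else 0)"
    by (simp add: sum_distrib_right)
  also have "\<dots> = (if r = s then 1 else 0)"
  proof -
    have "r = s \<longleftrightarrow> i = j \<and> a = b" using r s i_a_j_b_def by (metis div_mult_mod_eq)
    then show ?thesis using R ia by auto
  qed
  finally show "(\<Sum>t<k*q. cnj (tens k q R G $$ (t,r)) * tens k q R G $$ (t,s)) = (if r = s then 1 else 0)" .
qed

lemma tens_apply:
  assumes "dim_vec v = k*q" "l < k" "c < q"
  shows "(tens k q R G *\<^sub>v v) $ (l*q+c) = (\<Sum>l'<k. \<Sum>c'<q. complex_of_real (R l l') * G l c c' * v $ (l'*q+c'))"
proof -
  have "(tens k q R G *\<^sub>v v) $ (l*q+c) = (\<Sum>s<k*q. tens k q R G $$ (l*q+c, s) * v $ s)"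
    using assms idx_lt[OF assms(2,3)] by (subst mv_entry) (auto simp: tens_def)
  also have "\<dots> = (\<Sum>l'<k. \<Sum>c'<q. tens k q R G $$ (l*q+c, l'*q+c') * v $ (l'*q+c'))"
    by (rule sum_split_nat)
  also have "\<dots> = (\<Sum>l'<k. \<Sum>c'<q. complex_of_real (R l l') * G l c c' * v $ (l'*q+c'))"
    using assms by (intro sum.cong refl) (simp add: tens_entry)
  finally show ?thesis .
qed

definition hw :: "(nat \<Rightarrow> real) \<Rightarrow> nat \<Rightarrow> real" where
  "hw u i = (if i = 0 then 1 else 0) - u i"

definition hh :: "nat \<Rightarrow> (nat \<Rightarrow> real) \<Rightarrow> nat \<Rightarrow> nat \<Rightarrow> real" where
  "hh k u i j = (if i = j then 1 else 0) - 2 * hw u i * hw u j / (\<Sum>l<k. (hw u l)\<^sup>2)"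

lemma hh_sym: "hh k u i j = hh k u j i"
  by (simp add: hh_def mult_ac)

lemma sum_delta_lt: fixes j k :: nat shows "j < k \<Longrightarrow> (\<Sum>l<k. if l = j then f l else 0) = (f j :: real)"
  by (simp add: sum.delta)

lemma hh_orth:
  assumes W: "(\<Sum>l<k. (hw u l)\<^sup>2) \<noteq> 0" and ij: "i < k" "j < k"
  shows "(\<Sum>l<k. hh k u l i * hh k u l j) = (if i = j then 1 else 0)"
proof -
  define Wv where "Wv = (\<Sum>l<k. (hw u l)\<^sup>2)"
  define c where "c = 2 / Wv"
  define w where "w = hw u"
  have hh': "hh k u a b = (if a = b then 1 else 0) - c * w a * w b" for a b
    by (simp add: hh_def c_def Wv_def w_def)
  have e: "hh k u l i * hh k u l j = (if l = i then (if i = j then 1 else 0) else 0)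
           - (if l = j then c * w l * w i else 0) - (if l = i then c * w l * w j else 0)
           + c^2 * w i * w j * (w l)\<^sup>2" for l
    unfolding hh' by (auto simp: algebra_simps power2_eq_square)
  have "(\<Sum>l<k. hh k u l i * hh k u l j) = (if i = j then 1 else 0) - c * w j * w i - c * w i * w j
        + c^2 * w i * w j * Wv"
    unfolding e using ij
    by (simp add: sum.distrib sum_subtractf sum_delta_lt sum_distrib_left[symmetric] Wv_def w_def)
  also have "c^2 * Wv = 2 * c" using W by (simp add: c_def Wv_def power2_eq_square)
  then have "c^2 * w i * w j * Wv = 2 * c * w i * w j" by (metis mult.commute mult.left_commute)
  finally show ?thesis by (simp add: algebra_simps)
qed

lemma hh_W:
  assumes "0 < k" "(\<Sum>l<k. (u l)\<^sup>2) = 1"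
  shows "(\<Sum>l<k. (hw u l)\<^sup>2) = 2 - 2 * u 0"
proof -
  have e: "(hw u l)\<^sup>2 = (if l = 0 then 1 - 2 * u l else 0) + (u l)\<^sup>2" for l
    by (simp add: hw_def power2_eq_square algebra_simps)
  show ?thesis unfolding e using assms by (simp add: sum.distrib sum_delta_lt[where j=0, of k "\<lambda>l. 1 - 2 * u l", simplified])
qed

lemma hh_col0:
  assumes "0 < k" "(\<Sum>l<k. (u l)\<^sup>2) = 1" "u 0 \<noteq> 1"
  shows "hh k u i 0 = u i"
proof -
  have W: "(\<Sum>l<k. (hw u l)\<^sup>2) = 2 - 2 * u 0" by (rule hh_W[OF assms(1,2)])
  have "2 - 2 * u 0 \<noteq> 0" using assms(3) by simp
  then show ?thesis unfolding hh_def W by (simp add: hw_def field_simps)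
qed

lemma hh_W_nz: "0 < k \<Longrightarrow> (\<Sum>l<k. (u l)\<^sup>2) = 1 \<Longrightarrow> u 0 \<noteq> 1 \<Longrightarrow> (\<Sum>l<k. (hw u l)\<^sup>2) \<noteq> 0"
  using hh_W by force

lemma decomp3:
  fixes s n m :: nat
  assumes "s < n*(2*m)"
  shows "\<exists>l b z. l < n \<and> b < 2 \<and> z < m \<and> s = l*(2*m) + (b*m+z)"
proof -
  have m0: "0 < m" using assms by (cases m) auto
  define l where "l = s div (2*m)"
  define c where "c = s mod (2*m)"
  have l: "l < n" using assms by (simp add: l_def less_mult_imp_div_less)
  have c: "c < 2*m" using m0 by (simp add: c_def)
  have b: "c div m < 2" using c by (simp add: less_mult_imp_div_less)
  have "s = l*(2*m) + ((c div m)*m + c mod m)" by (metis div_mult_mod_eq mult.commute l_def c_def)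
  then show ?thesis using l b m0 by (intro exI[of _ l] exI[of _ "c div m"] exI[of _ "c mod m"]) auto
qed

lemma qflip_formula:
  assumes "b < 2" "z < m"
  shows "qflip m x (l*(2*m) + (b*m+z)) = l*(2*m) + ((if x!l then 1-b else b)*m+z)"
proof -
  have bz: "b*m+z < 2*m"
  proof -
    have "b*m+z < b*m+m" using assms by simp
    also have "\<dots> = (b+1)*m" by simp
    also have "\<dots> \<le> 2*m" using assms by (intro mult_right_mono) auto
    finally show ?thesis .
  qed
  have d1: "(l*(2*m) + (b*m+z)) div (2*m) = l" using bz by simp
  have e: "l*(2*m) + (b*m+z) = (l*2+b)*m + z" by (simp add: algebra_simps)
  have "(l*(2*m) + (b*m+z)) div m = l*2+b" unfolding e using assms by simp
  then have d2: "((l*(2*m) + (b*m+z)) div m) mod 2 = b" using assms by simp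
  show ?thesis unfolding qflip_def Let_def d1 d2 using assms
    by (cases "x!l"; cases b) auto
qed

lemma qflip_lt: "s < n*(2*m) \<Longrightarrow> qflip m x s < n*(2*m)"
  using decomp3[of s n m]
  by (auto simp: qflip_formula intro!: idx_lt)

lemma qflip_inv: "s < n*(2*m) \<Longrightarrow> qflip m x (qflip m x s) = s"
proof -
  assume "s < n*(2*m)"
  then obtain l b z where lbz: "l < n" "b < 2" "z < m" "s = l*(2*m) + (b*m+z)" using decomp3 by blast
  have "(if x!l then 1-b else b) < 2" using lbz by auto
  then show ?thesis using lbz by (simp add: qflip_formula)
qed

lemma query_apply:
  assumes "dim_vec v = qdim n m" "r < qdim n m"
  shows "(query_op n m x *\<^sub>v v) $ r = v $ (qflip m x r)"
proof -
  have N: "qdim n m = n*(2*m)" by (simp add: qdim_def)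
  have "(query_op n m x *\<^sub>v v) $ r = (\<Sum>s<qdim n m. (if r = qflip m x s then 1 else 0) * v $ s)"
    using assms by (subst mv_entry) (auto simp: query_op_def)
  also have "\<dots> = (\<Sum>s<qdim n m. if s = qflip m x r then v $ s else 0)"
  proof (intro sum.cong refl)
    fix s assume "s \<in> {..<qdim n m}"
    then have s: "s < n*(2*m)" using N by simp
    have "r = qflip m x s \<longleftrightarrow> s = qflip m x r"
      using qflip_inv[OF s] qflip_inv[of r n m x] assms(2) N by auto
    then show "(if r = qflip m x s then 1 else 0) * v $ s = (if s = qflip m x r then v $ s else 0)" by simp
  qed
  also have "\<dots> = v $ (qflip m x r)" using qflip_lt[of r n m x] assms(2) N by simp
  finally show ?thesis .
qed

lemma qprob1_sum:
  "qprob1 n m U T x = (\<Sum>l<n. \<Sum>z<m. (cmod (qstate n m U x T $ (l*(2*m) + (1*m+z))))\<^sup>2)"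
proof -
  define h where "h r = (cmod (qstate n m U x T $ r))\<^sup>2" for r
  have "qprob1 n m U T x = (\<Sum>r\<in>{r\<in>{..<(n*2)*m}. odd (r div m)}. h r)"
    by (simp add: qprob1_def h_def qdim_def)
  also have "\<dots> = (\<Sum>r<(n*2)*m. if odd (r div m) then h r else 0)"
    by (rule sum.inter_filter) simp
  also have "\<dots> = (\<Sum>q<n*2. \<Sum>z<m. if odd ((q*m+z) div m) then h (q*m+z) else 0)"
    by (rule sum_split_nat)
  also have "\<dots> = (\<Sum>q<n*2. \<Sum>z<m. if odd q then h (q*m+z) else 0)"
    by (intro sum.cong refl) auto
  also have "\<dots> = (\<Sum>l<n. \<Sum>b<2. \<Sum>z<m. if odd (l*2+b) then h ((l*2+b)*m+z) else 0)"
    by (rule sum_split_nat)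
  also have "\<dots> = (\<Sum>l<n. \<Sum>z<m. h ((l*2+1)*m+z))"
  proof (rule sum.cong[OF refl])
    fix l
    have two: "(\<Sum>c<(2::nat). f c) = f 0 + f 1" for f :: "nat \<Rightarrow> real" by (simp add: numeral_2_eq_2)
    show "(\<Sum>b<2. \<Sum>z<m. if odd (l*2+b) then h ((l*2+b)*m+z) else 0) = (\<Sum>z<m. h ((l*2+1)*m+z))"
      by (simp only: two) simp
  qed
  finally show ?thesis by (simp add: h_def algebra_simps)
qed

lemma lt2: "(b::nat) < 2 \<Longrightarrow> b = 0 \<or> b = 1" by auto

definition Hd :: "nat \<Rightarrow> nat \<Rightarrow> complex" where
  "Hd b b' = (if b = 1 \<and> b' = 1 then -1 else 1) / complex_of_real (sqrt 2)"

lemma Hd_sq: "complex_of_real (sqrt 2) * complex_of_real (sqrt 2) = 2"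
  by (simp flip: of_real_mult)

lemma Hd_orth: "a < 2 \<Longrightarrow> b < 2 \<Longrightarrow> (\<Sum>c<2. Hd c a * Hd c b) = (if a = b then 1 else 0)"
  using lt2[of a] lt2[of b] by (auto simp: Hd_def numeral_2_eq_2 Hd_sq)

lemma Hd_real: "cnj (Hd a b) = Hd a b" by (simp add: Hd_def)

lemma Hd_flip: "b < 2 \<Longrightarrow> Hd (1-b) 1 = - Hd b 1"
  using lt2[of b] by (auto simp: Hd_def)

lemma Hd_prod1: "a < 2 \<Longrightarrow> (\<Sum>b<2. Hd a b * Hd b 1) = (if a = 1 then 1 else 0)"
  using lt2[of a] by (auto simp: Hd_def numeral_2_eq_2 Hd_sq)

definition djG0 :: "nat \<Rightarrow> nat \<Rightarrow> nat \<Rightarrow> complex" where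
  "djG0 l b b' = Hd b (1-b')"
definition djG1 :: "nat \<Rightarrow> nat \<Rightarrow> nat \<Rightarrow> complex" where
  "djG1 l b b' = Hd (if l = 0 then b else 1-b) b'"

definition dju :: "nat \<Rightarrow> nat \<Rightarrow> real" where
  "dju L l = (if l < L then 1 / sqrt (real L) else 0)"

definition DJU :: "nat \<Rightarrow> nat \<Rightarrow> nat \<Rightarrow> complex mat" where
  "DJU n L t = (if t = 0 then tens n 2 (hh n (dju L)) djG0 else tens n 2 (hh n (dju L)) djG1)"

lemma dju_norm: "0 < L \<Longrightarrow> L \<le> n \<Longrightarrow> (\<Sum>l<n. (dju L l)\<^sup>2) = 1"
proof -
  assume a: "0 < L" "L \<le> n"
  have "(\<Sum>l<n. (dju L l)\<^sup>2) = (\<Sum>l<n. if l < L then 1 / real L else 0)"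
    by (intro sum.cong refl) (simp add: dju_def power_divide)
  also have "\<dots> = (\<Sum>l<L. if l < L then 1 / real L else 0)"
    by (rule sum.mono_neutral_right) (use a in auto)
  finally show ?thesis using a by simp
qed

lemma dju0: "2 \<le> L \<Longrightarrow> dju L 0 \<noteq> 1"
  by (simp add: dju_def)

lemma DJ_valid:
  assumes "2 \<le> L" "L \<le> n"
  shows "qalg_valid n 1 1 (DJU n L)"
proof -
  have n0: "0 < n" using assms by simp
  have W: "(\<Sum>l<n. (hw (dju L) l)\<^sup>2) \<noteq> 0"
    by (rule hh_W_nz[OF n0 dju_norm dju0]) (use assms in auto)
  have R: "\<And>i j. i < n \<Longrightarrow> j < n \<Longrightarrow> (\<Sum>l<n. hh n (dju L) l i * hh n (dju L) l j) = (if i = j then 1 else 0)"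
    using hh_orth[OF W] by blast
  have G0: "(\<Sum>c<2. cnj (djG0 l c a) * djG0 l c b) = (if a = b then 1 else 0)" if "a < 2" "b < 2" for l a b
    using Hd_orth[of "1-a" "1-b"] that by (auto simp: djG0_def Hd_real)
  have G1: "(\<Sum>c<2. cnj (djG1 l c a) * djG1 l c b) = (if a = b then 1 else 0)" if "a < 2" "b < 2" for l a b
  proof (cases "l = 0")
    case True then show ?thesis using Hd_orth[OF that] by (simp add: djG1_def Hd_real)
  next
    case False
    have "(\<Sum>c<2. cnj (djG1 l c a) * djG1 l c b) = (\<Sum>c<2. Hd c a * Hd c b)"
      using False by (simp add: djG1_def Hd_real numeral_2_eq_2 add.commute)
    then show ?thesis using Hd_orth[OF that] by simp
  qed
  have q: "qdim n 1 = n*2" by (simp add: qdim_def)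
  show ?thesis unfolding qalg_valid_def q
    using tens_unitary[OF R G0] tens_unitary[OF R G1] by (auto simp: DJU_def)
qed

lemma DJ_prob:
  assumes L: "2 \<le> L" "L \<le> n"
  shows "qprob1 n 1 (DJU n L) 1 x = ((\<Sum>l<L. if x!l then -1 else 1) / real L)\<^sup>2"
proof -
  define R where "R = hh n (dju L)"
  define u where "u = dju L"
  define sg where "sg l = (if x!l then -1 else 1 :: real)" for l
  have n0: "0 < n" using L by simp
  have q: "qdim n 1 = n*2" by (simp add: qdim_def)
  have Rc: "R l 0 = u l" for l
    unfolding R_def u_def by (rule hh_col0[OF n0 dju_norm dju0]) (use L in auto)
  have Rr: "R 0 l = u l" for l using Rc[of l] by (simp add: R_def hh_sym)
  define s0 where "s0 = DJU n L 0 *\<^sub>v unit_vec (qdim n 1) 0"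
  define s1 where "s1 = query_op n 1 x *\<^sub>v s0"
  define s2 where "s2 = DJU n L 1 *\<^sub>v s1"
  have ds0: "dim_vec s0 = qdim n 1" by (simp add: s0_def DJU_def tens_def qdim_def)
  have ds1: "dim_vec s1 = n*2" by (simp add: s1_def query_op_def qdim_def)
  have e0: "s0 $ (l*2+b) = complex_of_real (u l) * Hd b 1" if "l < n" "b < 2" for l b
  proof -
    have "s0 $ (l*2+b) = DJU n L 0 $$ (l*2+b, 0*2+0)"
      unfolding s0_def using that idx_lt[of l n b 2] n0 by (subst mv_unit) (auto simp: DJU_def tens_def qdim_def)
    also have "\<dots> = complex_of_real (R l 0) * djG0 l b 0"
      using that n0 tens_entry[of l n b 2 0 0 "hh n (dju L)" djG0] by (simp add: DJU_def R_def)
    finally show ?thesis by (simp add: Rc djG0_def)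
  qed
  have e1: "s1 $ (l*2+b) = complex_of_real (u l * sg l) * Hd b 1" if "l < n" "b < 2" for l b
  proof -
    have idx: "l*2+b = l*(2*1) + (b*1+0)" by simp
    have "s1 $ (l*2+b) = s0 $ (qflip 1 x (l*2+b))"
      unfolding s1_def using that ds0 idx_lt[of l n b 2] by (subst query_apply) (auto simp: qdim_def)
    also have "qflip 1 x (l*2+b) = l*2 + (if x!l then 1-b else b)"
      unfolding idx using that by (subst qflip_formula) auto
    also have "s0 $ (l*2 + (if x!l then 1-b else b)) = complex_of_real (u l) * Hd (if x!l then 1-b else b) 1"
      using that by (intro e0) auto
    finally show ?thesis using that Hd_flip[OF that(2)] by (auto simp: sg_def)
  qed
  define A where "A = (\<Sum>l'<n. u l' * u l' * sg l')"
  have e2: "s2 $ (l*2+1) = (if l = 0 then complex_of_real A else 0)" if "l < n" for l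
  proof -
    have "s2 $ (l*2+1) = (\<Sum>l'<n. \<Sum>b'<2. complex_of_real (R l l') * djG1 l 1 b' * s1 $ (l'*2+b'))"
      unfolding s2_def using that ds1 tens_apply[of s1 n 2 l 1 "hh n (dju L)" djG1] by (simp add: DJU_def R_def)
    also have "\<dots> = (\<Sum>l'<n. complex_of_real (R l l' * u l' * sg l') * (\<Sum>b'<2. Hd (if l = 0 then 1 else 0) b' * Hd b' 1))"
      by (intro sum.cong refl) (simp add: e1 djG1_def sum_distrib_left mult_ac)
    also have "\<dots> = (\<Sum>l'<n. complex_of_real (R l l' * u l' * sg l') * (if l = 0 then 1 else 0))"
      by (subst Hd_prod1) auto
    also have "\<dots> = (if l = 0 then complex_of_real A else 0)"
      by (auto simp: Rr A_def)
    finally show ?thesis .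
  qed
  have "qprob1 n 1 (DJU n L) 1 x = (\<Sum>l<n. (cmod (s2 $ (l*2+1)))\<^sup>2)"
    unfolding qprob1_sum by (simp add: s2_def s1_def s0_def)
  also have "\<dots> = (\<Sum>l<n. if l = 0 then A\<^sup>2 else 0)"
  proof (intro sum.cong refl)
    fix l assume "l \<in> {..<n}"
    then have ln: "l < n" by simp
    show "(cmod (s2 $ (l*2+1)))\<^sup>2 = (if l = 0 then A\<^sup>2 else 0)"
      unfolding e2[OF ln] by (auto simp: norm_of_real)
  qed
  also have "\<dots> = A\<^sup>2" using n0 by simp
  also have "A = (\<Sum>l'<n. if l' < L then sg l' / real L else 0)"
    unfolding A_def using L by (intro sum.cong refl) (auto simp: u_def dju_def)
  also have "\<dots> = (\<Sum>l'<L. if l' < L then sg l' / real L else 0)"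
    by (rule sum.mono_neutral_right) (use L in auto)
  also have "\<dots> = (\<Sum>l<L. if x!l then -1 else 1) / real L"
    by (simp add: sg_def sum_divide_distrib)
  finally show ?thesis .
qed

definition orq :: "nat \<Rightarrow> real" where "orq n = 1/2 - 1/(4 * real n)"

definition orG1 :: "nat \<Rightarrow> nat \<Rightarrow> nat \<Rightarrow> nat \<Rightarrow> complex" where
  "orG1 n l c c' = (let a = complex_of_real (sqrt (1 - orq n)); b = complex_of_real (sqrt (orq n)) in
     if c = c' \<and> (c = 1 \<or> c = 2) then 1
     else if c = 0 \<and> c' = 0 then a else if c = 0 \<and> c' = 3 then - b
     else if c = 3 \<and> c' = 0 then b else if c = 3 \<and> c' = 3 then a else 0)"

definition orG0 :: "nat \<Rightarrow> nat \<Rightarrow> nat \<Rightarrow> complex" where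
  "orG0 l c c' = (if c = c' then 1 else 0)"

definition idR :: "nat \<Rightarrow> nat \<Rightarrow> real" where
  "idR l l' = (if l = l' then 1 else 0)"

definition ORU :: "nat \<Rightarrow> nat \<Rightarrow> complex mat" where
  "ORU n t = (if t = 0 then tens n 4 (hh n (dju n)) orG0 else tens n 4 idR (orG1 n))"

lemma lt4: "(a::nat) < 4 \<Longrightarrow> a = 0 \<or> a = 1 \<or> a = 2 \<or> a = 3" by auto

lemma sum4: "(\<Sum>c<(4::nat). f c) = f 0 + f 1 + f 2 + f 3"
  by (simp add: eval_nat_numeral)

lemma orq_bounds: "1 \<le> n \<Longrightarrow> 0 \<le> orq n \<and> orq n \<le> 1"
  by (auto simp: orq_def field_simps)

lemma OR_valid:
  assumes "2 \<le> n"
  shows "qalg_valid n 2 1 (ORU n)"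
proof -
  have n0: "0 < n" using assms by simp
  have W: "(\<Sum>l<n. (hw (dju n) l)\<^sup>2) \<noteq> 0"
    by (rule hh_W_nz[OF n0 dju_norm dju0]) (use assms in auto)
  have R: "\<And>i j. i < n \<Longrightarrow> j < n \<Longrightarrow> (\<Sum>l<n. hh n (dju n) l i * hh n (dju n) l j) = (if i = j then 1 else 0)"
    using hh_orth[OF W] by blast
  have R1: "\<And>i j. i < n \<Longrightarrow> j < n \<Longrightarrow> (\<Sum>l<n. idR l i * idR l j) = (if i = j then 1 else 0)"
    by (simp add: idR_def if_distrib cong: if_cong)
  have G0: "(\<Sum>c<4. cnj (orG0 l c a) * orG0 l c b) = (if a = b then 1 else 0)" if "a < 4" "b < 4" for l a b
    using that by (simp add: orG0_def if_distrib cong: if_cong)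
  obtain qq where qq: "qq = orq n" by blast
  have qb: "0 \<le> qq" "qq \<le> 1" using orq_bounds[of n] assms qq by auto
  have ab: "complex_of_real (sqrt (1 - qq)) * complex_of_real (sqrt (1 - qq)) + complex_of_real (sqrt qq) * complex_of_real (sqrt qq) = 1"
    using qb by (simp flip: of_real_mult of_real_add)
  have G1: "(\<Sum>c<4. cnj (orG1 n l c a) * orG1 n l c b) = (if a = b then 1 else 0)" if "a < 4" "b < 4" for l a b
    using lt4[OF that(1)] lt4[OF that(2)] ab
    by (auto simp: orG1_def sum4 Let_def qq[symmetric] algebra_simps)
  have q: "qdim n 2 = n*4" by (simp add: qdim_def)
  show ?thesis unfolding qalg_valid_def q
    using tens_unitary[OF R G0] tens_unitary[OF R1 G1] by (auto simp: ORU_def)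
qed

lemma OR_prob:
  assumes n2: "2 \<le> n"
  shows "qprob1 n 2 (ORU n) 1 x = (\<Sum>l<n. if x!l then 1 else orq n) / real n"
proof -
  define R where "R = hh n (dju n)"
  define u where "u = dju n"
  have n0: "0 < n" using n2 by simp
  have Rc: "R l 0 = u l" for l
    unfolding R_def u_def by (rule hh_col0[OF n0 dju_norm dju0]) (use n2 in auto)
  define s0 where "s0 = ORU n 0 *\<^sub>v unit_vec (qdim n 2) 0"
  define s1 where "s1 = query_op n 2 x *\<^sub>v s0"
  define s2 where "s2 = ORU n 1 *\<^sub>v s1"
  have ds0: "dim_vec s0 = qdim n 2" by (simp add: s0_def ORU_def tens_def qdim_def)
  have ds1: "dim_vec s1 = n*4" by (simp add: s1_def query_op_def qdim_def)
  have e0: "s0 $ (l*4+c) = complex_of_real (u l) * (if c = 0 then 1 else 0)" if "l < n" "c < 4" for l c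
  proof -
    have "s0 $ (l*4+c) = ORU n 0 $$ (l*4+c, 0*4+0)"
      unfolding s0_def using that idx_lt[of l n c 4] n0 by (subst mv_unit) (auto simp: ORU_def tens_def qdim_def)
    also have "\<dots> = complex_of_real (R l 0) * orG0 l c 0"
      using that n0 tens_entry[of l n c 4 0 0 "hh n (dju n)" orG0] by (simp add: ORU_def R_def)
    finally show ?thesis by (simp add: Rc orG0_def)
  qed
  have e1: "s1 $ (l*4+c) = complex_of_real (u l) * (if c = (if x!l then 2 else 0) then 1 else 0)" if "l < n" "c < 4" for l c
  proof -
    define b z where "b = c div 2" "z = c mod 2"
    have bz: "b < 2" "z < 2" "c = b*2+z" using that by (auto simp: b_z_def)
    have idx: "l*4+c = l*(2*2) + (b*2+z)" using bz by simp
    have "s1 $ (l*4+c) = s0 $ (qflip 2 x (l*4+c))"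
      unfolding s1_def using that ds0 idx_lt[of l n c 4] by (subst query_apply) (auto simp: qdim_def)
    also have "qflip 2 x (l*4+c) = l*4 + ((if x!l then 1-b else b)*2+z)"
      unfolding idx using bz by (subst qflip_formula) auto
    also have "s0 $ (l*4 + ((if x!l then 1-b else b)*2+z)) =
       complex_of_real (u l) * (if (if x!l then 1-b else b)*2+z = 0 then 1 else 0)"
      using that bz by (intro e0) auto
    moreover have "((if x!l then 1-b else b)*2+z = 0) = (c = (if x!l then 2 else 0))"
      using lt4[OF that(2)] by (auto simp: b_z_def)
    ultimately show ?thesis by simp
  qed
  obtain qq where qq: "qq = orq n" by blast
  have qb: "0 \<le> qq" "qq \<le> 1" using orq_bounds[of n] n2 qq by auto
  have e2: "s2 $ (l*4+c) = orG1 n l c (if x!l then 2 else 0) * complex_of_real (u l)" if "l < n" "c < 4" for l c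
  proof -
    have "s2 $ (l*4+c) = (\<Sum>l'<n. \<Sum>c'<4. complex_of_real (idR l l') * orG1 n l c c' * s1 $ (l'*4+c'))"
      unfolding s2_def using that ds1 tens_apply[of s1 n 4 l c idR "orG1 n"] by (simp add: ORU_def)
    also have "\<dots> = (\<Sum>l'<n. if l' = l then (\<Sum>c'<4. orG1 n l c c' * s1 $ (l'*4+c')) else 0)"
      by (intro sum.cong refl) (auto simp: idR_def)
    also have "\<dots> = (\<Sum>c'<4. orG1 n l c c' * s1 $ (l*4+c'))"
      using that by simp
    also have "\<dots> = (\<Sum>c'<4. orG1 n l c c' * (complex_of_real (u l) * (if c' = (if x!l then 2 else 0) then 1 else 0)))"
      using that by (intro sum.cong refl) (simp add: e1)
    also have "\<dots> = orG1 n l c (if x!l then 2 else 0) * complex_of_real (u l)"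
      by (simp add: if_distrib cong: if_cong)
    finally show ?thesis .
  qed
  have "qprob1 n 2 (ORU n) 1 x = (\<Sum>l<n. \<Sum>z<2. (cmod (s2 $ (l*4+(2+z))))\<^sup>2)"
    unfolding qprob1_sum by (simp add: s2_def s1_def s0_def)
  also have "\<dots> = (\<Sum>l<n. (if x!l then 1 else qq) / real n)"
  proof (intro sum.cong refl)
    fix l assume "l \<in> {..<n}"
    then have ln: "l < n" by simp
    have two: "(\<Sum>z<(2::nat). f z) = f 0 + f 1" for f :: "nat \<Rightarrow> real" by (simp add: numeral_2_eq_2)
    have u2: "(u l)\<^sup>2 = 1 / real n" using ln n0 by (simp add: u_def dju_def power_divide)
    have "(\<Sum>z<2. (cmod (s2 $ (l*4+(2+z))))\<^sup>2) = (cmod (s2 $ (l*4+2)))\<^sup>2 + (cmod (s2 $ (l*4+3)))\<^sup>2"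
      by (simp add: two add.assoc[symmetric] add.commute del: add_2_eq_Suc add_2_eq_Suc')
    also have "\<dots> = (if x!l then 1 else qq) * (u l)\<^sup>2"
      using ln qb by (cases "x!l") (simp_all add: e2[OF ln, of 2, simplified] e2[OF ln, of 3, simplified] orG1_def Let_def qq[symmetric] norm_mult norm_of_real power_mult_distrib)
    also have "\<dots> = (if x!l then 1 else qq) / real n" by (simp add: u2)
    finally show "(\<Sum>z<2. (cmod (s2 $ (l*4+(2+z))))\<^sup>2) = (if x!l then 1 else qq) / real n" .
  qed
  also have "\<dots> = (\<Sum>l<n. if x!l then 1 else orq n) / real n"
    unfolding qq by (rule sum_divide_distrib[symmetric])
  finally show ?thesis .
qed

primrec hb :: "nat \<Rightarrow> nat \<Rightarrow> nat \<Rightarrow> bool" where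
  "hb 0 a i = False"
| "hb (Suc k) a i = (hb k (a mod 2^k) (i mod 2^k) \<noteq> (2^k \<le> a \<and> 2^k \<le> i))"

definition sgr :: "bool \<Rightarrow> real" where "sgr p = (if p then -1 else 1)"

lemma hb_orth:
  "a < 2^k \<Longrightarrow> b < 2^k \<Longrightarrow> a \<noteq> b \<Longrightarrow> (\<Sum>i<2^k. sgr (hb k a i \<noteq> hb k b i)) = 0"
proof (induction k arbitrary: a b)
  case 0 then show ?case by simp
next
  case (Suc k)
  define A B where "A = a mod 2^k" "B = b mod 2^k"
  define \<alpha> \<beta> where "\<alpha> = (2^k \<le> a)" "\<beta> = (2^k \<le> b)"
  define \<sigma> where "\<sigma> = (\<Sum>i<2^k. sgr (hb k A i \<noteq> hb k B i))"
  have AB: "A < 2^k" "B < 2^k" by (simp_all add: A_B_def)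
  have "(\<Sum>i<2^Suc k. sgr (hb (Suc k) a i \<noteq> hb (Suc k) b i))
      = (\<Sum>h<2. \<Sum>i<2^k. sgr (hb (Suc k) a (h*2^k+i) \<noteq> hb (Suc k) b (h*2^k+i)))"
    using sum_split_nat[of "\<lambda>i. sgr (hb (Suc k) a i \<noteq> hb (Suc k) b i)" 2 "2^k"] by (simp add: mult.commute)
  also have "\<dots> = \<sigma> + (\<Sum>i<2^k. sgr ((hb k A i \<noteq> \<alpha>) \<noteq> (hb k B i \<noteq> \<beta>)))"
    by (simp add: numeral_2_eq_2 A_B_def \<alpha>_\<beta>_def \<sigma>_def)
  also have "(\<Sum>i<2^k. sgr ((hb k A i \<noteq> \<alpha>) \<noteq> (hb k B i \<noteq> \<beta>))) = (if \<alpha> = \<beta> then \<sigma> else - \<sigma>)"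
  proof -
    have pt: "sgr ((p \<noteq> \<alpha>) \<noteq> (q \<noteq> \<beta>)) = (if \<alpha> = \<beta> then sgr (p \<noteq> q) else - sgr (p \<noteq> q))" for p q
      by (cases \<alpha>; cases \<beta>; cases p; cases q) (simp_all add: sgr_def)
    show ?thesis unfolding \<sigma>_def pt by (cases "\<alpha> = \<beta>") (simp_all add: sum_negf)
  qed
  finally have e: "(\<Sum>i<2^Suc k. sgr (hb (Suc k) a i \<noteq> hb (Suc k) b i)) = \<sigma> + (if \<alpha> = \<beta> then \<sigma> else - \<sigma>)" .
  show ?case
  proof (cases "\<alpha> = \<beta>")
    case True
    have "A \<noteq> B"
    proof
      assume "A = B"
      have "a = (if \<alpha> then 2^k else 0) + A" using Suc.prems(1)
        by (auto simp: A_B_def \<alpha>_\<beta>_def le_mod_geq)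
      moreover have "b = (if \<beta> then 2^k else 0) + B" using Suc.prems(2)
        by (auto simp: A_B_def \<alpha>_\<beta>_def le_mod_geq)
      ultimately show False using True \<open>A = B\<close> Suc.prems(3) by simp
    qed
    then have "\<sigma> = 0" using Suc.IH[OF AB] by (simp add: \<sigma>_def)
    then show ?thesis using e by simp
  next
    case False then show ?thesis using e by simp
  qed
qed

definition hs :: "nat \<Rightarrow> nat \<Rightarrow> nat \<Rightarrow> bool list" where
  "hs k n a = map (\<lambda>i. i < 2^k \<and> hb k a i) [0..<n]"

lemma xor_map: "xor_list (map f [0..<n]) (map g [0..<n]) = map (\<lambda>i. f i \<noteq> g i) [0..<n]"
  by (rule nth_equalityI) (simp_all add: xor_list_def)

lemma and_map: "length x = n \<Longrightarrow> and_list x (map g [0..<n]) = map (\<lambda>i. x!i \<and> g i) [0..<n]"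
  by (rule nth_equalityI) (simp_all add: and_list_def)

lemma final_arith:
  fixes C d :: real
  assumes C: "0 < C" and t: "real t \<le> C * d" and n: "real n < 4^(t+1)" and n16: "16 \<le> n"
  shows "1/(2*C*ln 4) * ln (real n) \<le> d"
proof -
  have l4: "0 < ln (4::real)" by simp
  have "ln (real n) < ln (4^(t+1))" using n n16 by (subst ln_less_cancel_iff) auto
  also have "ln ((4::real)^(t+1)) = real (t+1) * ln 4" by (rule ln_realpow)
  finally have a: "ln (real n) < (real t + 1) * ln 4" by (simp add: add.commute)
  have "ln (16::real) \<le> ln (real n)" using n16 by (subst ln_le_cancel_iff) auto
  moreover have "ln (16::real) = 2 * ln 4"
    using ln_realpow[of 4 2] by simp
  ultimately have b: "2 * ln 4 \<le> ln (real n)" by simp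
  have "ln (real n) / (2 * ln 4) \<le> real t"
  proof -
    have a': "ln (real n) < real t * ln 4 + ln 4" using a by (simp add: algebra_simps)
    have "ln (real n) / 2 < real t * ln 4" using a' b by linarith
    then show ?thesis using l4 by (simp add: field_simps)
  qed
  also have "\<dots> \<le> C * d" by (rule t)
  finally show ?thesis using C l4 by (simp add: field_simps)
qed

lemma pprob1_nonneg: "0 \<le> pprob1 P xy"
  by (simp add: pprob1_def sum_nonneg)

lemma exists_pow2:
  "2 \<le> (n::nat) \<Longrightarrow> \<exists>k. 1 \<le> k \<and> 2^k \<le> n \<and> n < 2 * 2^k"
proof (induction n rule: less_induct)
  case (less n)
  show ?case
  proof (cases "n < 4")
    case True then show ?thesis using less.prems by (intro exI[of _ 1]) auto
  next
    case False
    then have "2 \<le> n div 2" "n div 2 < n" by auto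
    from less.IH[OF this(2) this(1)] obtain k where k: "1 \<le> k" "2^k \<le> n div 2" "n div 2 < 2 * 2^k" by blast
    have "2^(k+1) \<le> n" using k(2) by simp
    moreover have "n < 2 * 2^(k+1)" using k(3) by simp
    ultimately show ?thesis using k(1) by (intro exI[of _ "k+1"]) auto
  qed
qed

definition djF :: "nat \<Rightarrow> bool list \<Rightarrow> bool" where
  "djF L z = (\<forall>l<L. \<not> z!l)"

definition djX :: "nat \<Rightarrow> nat \<Rightarrow> bool list set" where
  "djX n L = {z. length z = n \<and> (djF L z \<or> (\<Sum>l<L. sgr (z!l)) = 0)}"

lemma dj_exact:
  assumes "2 \<le> L" "L \<le> n" "z \<in> djX n L"
  shows "qprob1 n 1 (DJU n L) 1 z = (if djF L z then 1 else 0)"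
proof -
  have e: "(\<Sum>l<L. if z!l then -1 else 1) = (\<Sum>l<L. sgr (z!l))" by (simp add: sgr_def)
  have p: "qprob1 n 1 (DJU n L) 1 z = ((\<Sum>l<L. sgr (z!l)) / real L)\<^sup>2"
    using DJ_prob[OF assms(1,2), of z] e by simp
  have L0: "real L \<noteq> 0" using assms by simp
  show ?thesis
  proof (cases "djF L z")
    case True
    then have "(\<Sum>l<L. sgr (z!l)) = real L" by (simp add: djF_def sgr_def)
    then show ?thesis using True L0 unfolding p by simp
  next
    case False
    then have "(\<Sum>l<L. sgr (z!l)) = 0" using assms(3) by (simp add: djX_def)
    then show ?thesis using False unfolding p by simp
  qed
qed

lemma hs_xor:
  assumes k: "2^k \<le> n" and ab: "a < 2^k" "b < 2^k"
  shows "(hs k n a, hs k n b) \<in> xor_dom n (djX n (2^k)) \<and> (xor_fun (djF (2^k)) (hs k n a, hs k n b) \<longleftrightarrow> a = b)"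
proof -
  define z where "z = xor_list (hs k n a) (hs k n b)"
  have z: "z = map (\<lambda>i. (i < 2^k \<and> hb k a i) \<noteq> (i < 2^k \<and> hb k b i)) [0..<n]"
    by (simp add: z_def hs_def xor_map)
  have zl: "length z = n" by (simp add: z)
  have zi: "z!l = (hb k a l \<noteq> hb k b l)" if "l < 2^k" for l using that k by (simp add: z)
  have sumz: "(\<Sum>l<2^k. sgr (z!l)) = (\<Sum>l<2^k. sgr (hb k a l \<noteq> hb k b l))"
    by (intro sum.cong refl) (simp add: zi)
  have iff: "djF (2^k) z \<longleftrightarrow> a = b"
  proof
    assume "a = b" then show "djF (2^k) z" by (simp add: djF_def zi)
  next
    assume d: "djF (2^k) z"
    show "a = b"
    proof (rule ccontr)
      assume "a \<noteq> b"
      then have "(\<Sum>l<2^k. sgr (z!l)) = 0" using hb_orth[OF ab] sumz by simp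
      moreover have "(\<Sum>l<2^k. sgr (z!l)) = real (2^k)" using d by (simp add: djF_def sgr_def)
      ultimately show False by simp
    qed
  qed
  have mem: "z \<in> djX n (2^k)"
  proof (cases "a = b")
    case True then show ?thesis using iff zl by (simp add: djX_def)
  next
    case False then show ?thesis using hb_orth[OF ab] sumz zl by (simp add: djX_def)
  qed
  have lh: "length (hs k n a) = n" "length (hs k n b) = n" by (simp_all add: hs_def)
  show ?thesis using mem iff lh unfolding xor_dom_def xor_fun_def z_def by simp
qed

lemma rank_L:
  assumes k: "2^k \<le> n"
    and P: "\<And>a b. a < 2^k \<Longrightarrow> b < 2^k \<Longrightarrow> (pprob1 P (hs k n a, hs k n b) = 0 \<longleftrightarrow> a \<noteq> b)"
  shows "(2::nat)^k \<le> 2*4^nmsg P"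
proof -
  obtain J :: "(nat \<times> nat \<times> bool) set" and \<alpha> \<beta> where J: "finite J" "card J = 2*4^nmsg P"
    "\<And>x y. pprob1 P (x,y) = (\<Sum>j\<in>J. \<alpha> j x * \<beta> j y)"
    using pprob1_bilinear[of P] by blast
  have "card {..<(2::nat)^k} \<le> card J"
    by (rule rank_bound[of J "{..<2^k}" "\<lambda>j a. \<alpha> j (hs k n a)" "\<lambda>j a. \<beta> j (hs k n a)"])
       (use J P in \<open>auto simp flip: J(3)\<close>)
  then show ?thesis using J by simp
qed

lemma pow_bound: "(L::nat) \<le> 2*4^t \<Longrightarrow> n < 2*L \<Longrightarrow> real n < 4^(t+1)"
proof -
  assume a: "L \<le> 2*4^t" "n < 2*L"
  then have "n < 4^(t+1)" by simp
  then have "real n < real (4^(t+1))" by linarith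
  then show ?thesis by simp
qed

lemma djpart:
  fixes D :: "nat \<Rightarrow> real" and C :: real
  assumes C: "C > 0" and n: "16 \<le> n"
    and H: "\<And>k. 1 \<le> k \<Longrightarrow> 2^k \<le> n \<Longrightarrow> \<exists>P. (\<forall>a b. a < 2^k \<longrightarrow> b < 2^k \<longrightarrow> (pprob1 P (hs k n a, hs k n b) = 0 \<longleftrightarrow> a \<noteq> b))
            \<and> real (nmsg P) \<le> C * D n"
  shows "1/(2*C*ln 4) * ln (real n) \<le> D n"
proof -
  obtain k where k: "1 \<le> k" "2^k \<le> n" "n < 2 * 2^k" using exists_pow2[of n] n by auto
  obtain P where P: "\<forall>a b. a < 2^k \<longrightarrow> b < 2^k \<longrightarrow> (pprob1 P (hs k n a, hs k n b) = 0 \<longleftrightarrow> a \<noteq> b)"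
    "real (nmsg P) \<le> C * D n" using H[OF k(1,2)] by blast
  have "(2::nat)^k \<le> 2*4^nmsg P" using rank_L[OF k(2)] P(1) by blast
  then have "real n < 4^(nmsg P+1)" using pow_bound k(3) by blast
  then show ?thesis using final_arith[OF C P(2) _ n] by blast
qed

definition orF :: "bool list \<Rightarrow> bool" where
  "orF z = (\<exists>l<length z. z!l)"

lemma or_unbounded:
  assumes n2: "2 \<le> n"
  shows "unbounded_comp {x. length x = n} orF (qprob1 n 2 (ORU n) 1)"
  unfolding unbounded_comp_def
proof (intro ballI)
  fix z :: "bool list" assume "z \<in> {x. length x = n}"
  then have zl: "length z = n" by simp
  have n0: "0 < real n" using n2 by simp
  have p: "qprob1 n 2 (ORU n) 1 z = (\<Sum>l<n. if z!l then 1 else orq n) / real n"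
    by (rule OR_prob[OF n2])
  show "if orF z then qprob1 n 2 (ORU n) 1 z > 1/2 else 1 - qprob1 n 2 (ORU n) 1 z > 1/2"
  proof (cases "orF z")
    case True
    then obtain l0 where l0: "l0 < n" "z!l0" using zl by (auto simp: orF_def)
    have "0 \<le> 1/(4*real n)" by simp
    then have oq: "orq n \<le> 1" unfolding orq_def by linarith
    have "(\<Sum>l<n. orq n + (if l = l0 then 1 - orq n else 0)) \<le> (\<Sum>l<n. if z!l then 1 else orq n)"
      by (rule sum_mono) (use l0 oq in auto)
    moreover have "(\<Sum>l<n. orq n + (if l = l0 then 1 - orq n else 0)) = real n * orq n + (1 - orq n)"
      using l0 by (simp add: sum.distrib)
    ultimately have s: "real n * orq n + (1 - orq n) \<le> (\<Sum>l<n. if z!l then 1 else orq n)" by simp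
    have "real n / 2 < real n * orq n + (1 - orq n)"
      using n0 by (simp add: orq_def field_simps) (metis add_pos_pos mult_pos_pos of_nat_0_less_iff zero_less_numeral)
    then have "real n / 2 < (\<Sum>l<n. if z!l then 1 else orq n)" using s by simp
    then have "1/2 < (\<Sum>l<n. if z!l then 1 else orq n) / real n" using n0 by (simp add: field_simps)
    then show ?thesis using True p by simp
  next
    case False
    then have "\<forall>l<n. \<not> z!l" using zl by (auto simp: orF_def)
    then have "(\<Sum>l<n. if z!l then 1 else orq n) = real n * orq n" by simp
    then have "qprob1 n 2 (ORU n) 1 z = orq n" using p n0 by simp
    moreover have "orq n < 1/2" using n0 by (simp add: orq_def)
    ultimately show ?thesis using False by simp
  qed
qed

lemma orpart:
  fixes D :: "nat \<Rightarrow> real" and C :: real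
  assumes C: "C > 0" and n: "16 \<le> n"
    and H: "\<exists>P. unbounded_comp (and_dom n) (and_fun orF) (pprob1 P) \<and> real (nmsg P) \<le> C * D n"
  shows "1/(2*C*ln 4) * ln (real n) \<le> D n"
proof -
  obtain P where P: "unbounded_comp (and_dom n) (and_fun orF) (pprob1 P)" "real (nmsg P) \<le> C * D n"
    using H by blast
  obtain J :: "(nat \<times> nat \<times> bool) set" and \<alpha> \<beta> where J: "finite J" "card J = 2*4^nmsg P"
    "\<And>x y. pprob1 P (x,y) = (\<Sum>j\<in>J. \<alpha> j x * \<beta> j y)"
    using pprob1_bilinear[of P] by blast
  define nrm where "nrm x = (if length x = n then x else replicate n False)" for x :: "bool list"
  define ev where "ev i = map (\<lambda>l. l = i) [0..<n]" for i
  have nl: "length (nrm x) = n" for x by (simp add: nrm_def)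
  have key: "pprob1 P (nrm x, ev i) > 1/2 \<and> nrm x ! i \<or> pprob1 P (nrm x, ev i) < 1/2 \<and> \<not> nrm x ! i"
    if "i < n" for x i
  proof -
    have dom: "(nrm x, ev i) \<in> and_dom n" by (simp add: and_dom_def nl ev_def)
    have "and_list (nrm x) (ev i) = map (\<lambda>l. nrm x ! l \<and> l = i) [0..<n]"
      unfolding ev_def by (rule and_map[OF nl])
    then have af: "and_fun orF (nrm x, ev i) = nrm x ! i"
      using that by (auto simp: and_fun_def orF_def)
    from P(1) dom have "if and_fun orF (nrm x, ev i) then pprob1 P (nrm x, ev i) > 1/2 else 1 - pprob1 P (nrm x, ev i) > 1/2"
      unfolding unbounded_comp_def by blast
    then show ?thesis using af by (auto split: if_splits)
  qed
  have "n \<le> card J + 1"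
  proof (rule sign_bound[of J n "\<lambda>x i. nrm x ! i" "\<lambda>j x. \<alpha> j (nrm x)" "\<lambda>j i. \<beta> j (ev i)"])
    show "finite J" by (rule J(1))
    show "\<forall>S\<subseteq>{..<n}. \<exists>x. \<forall>i<n. nrm x ! i \<longleftrightarrow> i \<in> S"
    proof (intro allI impI)
      fix S :: "nat set" assume "S \<subseteq> {..<n}"
      show "\<exists>x. \<forall>i<n. nrm x ! i \<longleftrightarrow> i \<in> S"
        by (intro exI[of _ "map (\<lambda>l. l \<in> S) [0..<n]"]) (simp add: nrm_def)
    qed
    show "\<forall>x. \<forall>i<n. nrm x ! i \<longrightarrow> (\<Sum>j\<in>J. \<alpha> j (nrm x) * \<beta> j (ev i)) > 1/2"
      using key by (auto simp flip: J(3))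
    show "\<forall>x. \<forall>i<n. \<not> nrm x ! i \<longrightarrow> (\<Sum>j\<in>J. \<alpha> j (nrm x) * \<beta> j (ev i)) < 1/2"
      using key by (auto simp flip: J(3))
  qed
  then have h: "n \<le> 2 * 4^nmsg P + 1" using J(2) by simp
  have p1: "1 \<le> (4::nat)^nmsg P" by simp
  have "n < 4 * 4^nmsg P" using h p1 by linarith
  then have "n < 4^(nmsg P + 1)" by simp
  then have "real n < real (4^(nmsg P + 1))" by linarith
  then have "real n < 4^(nmsg P + 1)" by simp
  then show ?thesis using final_arith[OF C P(2) _ n] by blast
qed

theorem theorem4:
  shows
  "(\<forall>(D :: nat \<Rightarrow> real) (C :: real).
      (\<forall>n. D n > 0) \<and> C > 0 \<and>
      (\<forall>n X F T m U. X \<subseteq> {x. length x = n} \<and> qalg_valid n m T U \<and>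
          nondet_comp X F (qprob1 n m U T) \<longrightarrow>
          (\<exists>P. qprot_valid n P \<and> nondet_comp (xor_dom n X) (xor_fun F) (pprob1 P) \<and>
               real (nmsg P) \<le> C * D n * real T))
      \<longrightarrow> (\<exists>c > 0. \<exists>N0. \<forall>n \<ge> N0. D n \<ge> c * ln (real n)))
   \<and>
   (\<forall>(D :: nat \<Rightarrow> real) (C :: real).
      (\<forall>n. D n > 0) \<and> C > 0 \<and>
      (\<forall>n X F T m U. X \<subseteq> {x. length x = n} \<and> qalg_valid n m T U \<and>
          exact_comp X F (qprob1 n m U T) \<longrightarrow>
          (\<exists>P. qprot_valid n P \<and> exact_comp (xor_dom n X) (xor_fun F) (pprob1 P) \<and>
               real (nmsg P) \<le> C * D n * real T))
      \<longrightarrow> (\<exists>c > 0. \<exists>N0. \<forall>n \<ge> N0. D n \<ge> c * ln (real n)))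
   \<and>
   (\<forall>(D :: nat \<Rightarrow> real) (C :: real).
      (\<forall>n. D n > 0) \<and> C > 0 \<and>
      (\<forall>n F T m U. qalg_valid n m T U \<and>
          unbounded_comp {x. length x = n} F (qprob1 n m U T) \<longrightarrow>
          (\<exists>P. qprot_valid n P \<and> unbounded_comp (and_dom n) (and_fun F) (pprob1 P) \<and>
               real (nmsg P) \<le> C * D n * real T))
      \<longrightarrow> (\<exists>c > 0. \<exists>N0. \<forall>n \<ge> N0. D n \<ge> c * ln (real n)))"
proof (intro conjI allI impI)
  fix D :: "nat \<Rightarrow> real" and C :: real
  assume A: "(\<forall>n. D n > 0) \<and> C > 0 \<and>
      (\<forall>n X F T m U. X \<subseteq> {x. length x = n} \<and> qalg_valid n m T U \<and>
          nondet_comp X F (qprob1 n m U T) \<longrightarrow>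
          (\<exists>P. qprot_valid n P \<and> nondet_comp (xor_dom n X) (xor_fun F) (pprob1 P) \<and>
               real (nmsg P) \<le> C * D n * real T))"
  then have C: "C > 0" by blast
  from A have H: "\<And>n X F T m U. X \<subseteq> {x. length x = n} \<Longrightarrow> qalg_valid n m T U \<Longrightarrow>
          nondet_comp X F (qprob1 n m U T) \<Longrightarrow>
          (\<exists>P. qprot_valid n P \<and> nondet_comp (xor_dom n X) (xor_fun F) (pprob1 P) \<and>
               real (nmsg P) \<le> C * D n * real T)" by blast
  show "\<exists>c > 0. \<exists>N0. \<forall>n \<ge> N0. D n \<ge> c * ln (real n)"
  proof (intro exI[of _ "1/(2*C*ln 4)"] conjI exI[of _ 16] allI impI)
    show "1/(2*C*ln 4) > 0" using C by simp
    fix n :: nat assume n: "16 \<le> n"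
    show "D n \<ge> 1/(2*C*ln 4) * ln (real n)"
    proof (rule djpart[OF C n])
      fix k :: nat assume k: "1 \<le> k" "2^k \<le> n"
      have L2: "2 \<le> (2::nat)^k" using k(1) by (metis one_le_numeral power_increasing power_one_right)
      have qv: "qalg_valid n 1 1 (DJU n (2^k))" by (rule DJ_valid[OF L2 k(2)])
      have nd: "nondet_comp (djX n (2^k)) (djF (2^k)) (qprob1 n 1 (DJU n (2^k)) 1)"
        unfolding nondet_comp_def using dj_exact[OF L2 k(2)] by simp
      have sub: "djX n (2^k) \<subseteq> {x. length x = n}" by (auto simp: djX_def)
      obtain P where P: "nondet_comp (xor_dom n (djX n (2^k))) (xor_fun (djF (2^k))) (pprob1 P)"
        "real (nmsg P) \<le> C * D n * real (1::nat)"
        using H[OF sub qv nd] by blast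
      have "\<forall>a b. a < 2^k \<longrightarrow> b < 2^k \<longrightarrow> (pprob1 P (hs k n a, hs k n b) = 0 \<longleftrightarrow> a \<noteq> b)"
      proof (intro allI impI)
        fix a b :: nat assume ab: "a < 2^k" "b < 2^k"
        from hs_xor[OF k(2) ab] P(1) have "pprob1 P (hs k n a, hs k n b) > 0 \<longleftrightarrow> a = b"
          unfolding nondet_comp_def by blast
        then show "pprob1 P (hs k n a, hs k n b) = 0 \<longleftrightarrow> a \<noteq> b"
          using pprob1_nonneg[of P "(hs k n a, hs k n b)"] by auto
      qed
      then show "\<exists>P. (\<forall>a b. a < 2^k \<longrightarrow> b < 2^k \<longrightarrow> (pprob1 P (hs k n a, hs k n b) = 0 \<longleftrightarrow> a \<noteq> b))
            \<and> real (nmsg P) \<le> C * D n" using P(2) by auto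
    qed
  qed
next
  fix D :: "nat \<Rightarrow> real" and C :: real
  assume A: "(\<forall>n. D n > 0) \<and> C > 0 \<and>
      (\<forall>n X F T m U. X \<subseteq> {x. length x = n} \<and> qalg_valid n m T U \<and>
          exact_comp X F (qprob1 n m U T) \<longrightarrow>
          (\<exists>P. qprot_valid n P \<and> exact_comp (xor_dom n X) (xor_fun F) (pprob1 P) \<and>
               real (nmsg P) \<le> C * D n * real T))"
  then have C: "C > 0" by blast
  from A have H: "\<And>n X F T m U. X \<subseteq> {x. length x = n} \<Longrightarrow> qalg_valid n m T U \<Longrightarrow>
          exact_comp X F (qprob1 n m U T) \<Longrightarrow>
          (\<exists>P. qprot_valid n P \<and> exact_comp (xor_dom n X) (xor_fun F) (pprob1 P) \<and>
               real (nmsg P) \<le> C * D n * real T)" by blast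
  show "\<exists>c > 0. \<exists>N0. \<forall>n \<ge> N0. D n \<ge> c * ln (real n)"
  proof (intro exI[of _ "1/(2*C*ln 4)"] conjI exI[of _ 16] allI impI)
    show "1/(2*C*ln 4) > 0" using C by simp
    fix n :: nat assume n: "16 \<le> n"
    show "D n \<ge> 1/(2*C*ln 4) * ln (real n)"
    proof (rule djpart[OF C n])
      fix k :: nat assume k: "1 \<le> k" "2^k \<le> n"
      have L2: "2 \<le> (2::nat)^k" using k(1) by (metis one_le_numeral power_increasing power_one_right)
      have qv: "qalg_valid n 1 1 (DJU n (2^k))" by (rule DJ_valid[OF L2 k(2)])
      have nd: "exact_comp (djX n (2^k)) (djF (2^k)) (qprob1 n 1 (DJU n (2^k)) 1)"
        unfolding exact_comp_def using dj_exact[OF L2 k(2)] by simp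
      have sub: "djX n (2^k) \<subseteq> {x. length x = n}" by (auto simp: djX_def)
      obtain P where P: "exact_comp (xor_dom n (djX n (2^k))) (xor_fun (djF (2^k))) (pprob1 P)"
        "real (nmsg P) \<le> C * D n * real (1::nat)"
        using H[OF sub qv nd] by blast
      have "\<forall>a b. a < 2^k \<longrightarrow> b < 2^k \<longrightarrow> (pprob1 P (hs k n a, hs k n b) = 0 \<longleftrightarrow> a \<noteq> b)"
      proof (intro allI impI)
        fix a b :: nat assume ab: "a < 2^k" "b < 2^k"
        from hs_xor[OF k(2) ab] P(1) show "pprob1 P (hs k n a, hs k n b) = 0 \<longleftrightarrow> a \<noteq> b"
          unfolding exact_comp_def by auto
      qed
      then show "\<exists>P. (\<forall>a b. a < 2^k \<longrightarrow> b < 2^k \<longrightarrow> (pprob1 P (hs k n a, hs k n b) = 0 \<longleftrightarrow> a \<noteq> b))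
            \<and> real (nmsg P) \<le> C * D n" using P(2) by auto
    qed
  qed
next
  fix D :: "nat \<Rightarrow> real" and C :: real
  assume A: "(\<forall>n. D n > 0) \<and> C > 0 \<and>
      (\<forall>n F T m U. qalg_valid n m T U \<and>
          unbounded_comp {x. length x = n} F (qprob1 n m U T) \<longrightarrow>
          (\<exists>P. qprot_valid n P \<and> unbounded_comp (and_dom n) (and_fun F) (pprob1 P) \<and>
               real (nmsg P) \<le> C * D n * real T))"
  then have C: "C > 0" by blast
  from A have H: "\<And>n F T m U. qalg_valid n m T U \<Longrightarrow>
          unbounded_comp {x. length x = n} F (qprob1 n m U T) \<Longrightarrow>
          (\<exists>P. qprot_valid n P \<and> unbounded_comp (and_dom n) (and_fun F) (pprob1 P) \<and>
               real (nmsg P) \<le> C * D n * real T)" by blast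
  show "\<exists>c > 0. \<exists>N0. \<forall>n \<ge> N0. D n \<ge> c * ln (real n)"
  proof (intro exI[of _ "1/(2*C*ln 4)"] conjI exI[of _ 16] allI impI)
    show "1/(2*C*ln 4) > 0" using C by simp
    fix n :: nat assume n: "16 \<le> n"
    then have n2: "2 \<le> n" by simp
    show "D n \<ge> 1/(2*C*ln 4) * ln (real n)"
    proof (rule orpart[OF C n])
      obtain P where P: "unbounded_comp (and_dom n) (and_fun orF) (pprob1 P)"
        "real (nmsg P) \<le> C * D n * real (1::nat)"
        using H[OF OR_valid[OF n2] or_unbounded[OF n2]] by blast
      then show "\<exists>P. unbounded_comp (and_dom n) (and_fun orF) (pprob1 P) \<and> real (nmsg P) \<le> C * D n"
        by auto
    qed
  qed
qed

end
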